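(* Let $(G,N,\theta)_{\mathcal H}$ and $(H,M,\varphi)_{\mathcal H}$ be $\mathcal H$-triples with $H\le G$ satisfying: (i) $G=NH$, $N\cap H=M$, $\mathbf C_G(N)\subseteq H$; and (ii) $(H\times\mathcal H)_\theta=(H\times\mathcal H)_\varphi$. Write $A=(H\times\mathcal H)_\theta$. Let $\mathcal P$ and $\mathcal P'$ be projective representations of $G_\theta$ and $H_\varphi$ associated with $\theta$ and $\varphi$ respectively, with entries in $\mathbb Q^{\mathrm{ab}}$, whose factor sets $\alpha,\alpha'$ take root-of-unity values, with $\alpha$ and $\alpha'$ equal on $H_\theta\times H_\theta$, and such that for each $c\in\mathbf C_G(N)$ the scalar matrices $\mathcal P(c)$ and $\mathcal P'(c)$ correspond to the same scalar. Then the condition "$\mu_a$ and $\mu'_a$ agree on $H_\theta$" holds for every $a\in A$ if and only if it holds for every $a$ in some complete set of representatives of the cosets of $H_\theta$ (identified with $H_\theta\times\{1\}$) in $A$.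
   Context: All groups are finite; $p$ is a fixed prime. $\mathbb Q^{\mathrm{ab}}\subseteq\mathbb C$ is generated by all roots of unity, $\mathcal G=\mathrm{Gal}(\mathbb Q^{\mathrm{ab}}/\mathbb Q)$, $\mathcal H\le\mathcal G$ consists of those $\sigma$ for which there is an integer $f$ with $\sigma(\xi)=\xi^{p^f}$ for all roots of unity $\xi$ of order prime to $p$. For $N\trianglelefteq G$, $\theta\in\mathrm{Irr}(N)$, $g\in G$, $\sigma\in\mathcal G$: $\theta^{g\sigma}(n)=\sigma(\theta(gng^{-1}))$; $(H\times\mathcal H)_\theta$ is the stabilizer; $\theta^{\mathcal H}$ the $\mathcal H$-orbit; $G_{\theta^{\mathcal H}}=\{g:\theta^g\in\theta^{\mathcal H}\}$. $(G,N,\theta)_{\mathcal H}$ is an $\mathcal H$-triple if $N\trianglelefteq G$, $\theta\in\mathrm{Irr}(N)$, $G_{\theta^{\mathcal H}}=G$. Projective representation $\mathcal P$ with factor set $\alpha$: $\mathcal P(x)\mathcal P(y)=\alpha(x,y)\mathcal P(xy)$. For $G$-invariant $\theta$, $\mathcal P$ is associated with $\theta$ if $\mathcal P_N$ affords $\theta$ and $\mathcal P(ng)=\mathcal P(n)\mathcal P(g)$, $\mathcal P(gn)=\mathcal P(g)\mathcal P(n)$. For $a=(x,\sigma)$ with $\theta^{x\sigma}=\theta$, $\mathcal P^{a}(y)=\sigma(\mathcal P(xyx^{-1}))$ (entrywise), and $\mu_a:G_\theta\to\mathbb C^\times$ is the unique function, constant on $N$-cosets, $\mu_a(1)=1$,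 such that $\mathcal P^a(y)=\mu_a(y)L^{-1}\mathcal P(y)L$ for all $y$ and some invertible $L$; $\mu'_a:H_\varphi\to\mathbb C^\times$ is defined in the same way from $\mathcal P'$ and $\varphi$. *)

theory Defs
  imports "HOL-Algebra.Algebra" "Jordan_Normal_Form.Matrix"
begin

definition root_of_unity :: "complex \<Rightarrow> bool" where
  "root_of_unity z \<longleftrightarrow> (\<exists>n::nat. n > 0 \<and> z ^ n = 1)"

definition is_subfield :: "complex set \<Rightarrow> bool" where
  "is_subfield K \<longleftrightarrow> 0 \<in> K \<and> 1 \<in> K \<and> (\<forall>x\<in>K. \<forall>y\<in>K. x + y \<in> K \<and> x * y \<in> K)
     \<and> (\<forall>x\<in>K. - x \<in> K \<and> inverse x \<in> K)"

definition Qab :: "complex set" where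
  "Qab = \<Inter>{K. is_subfield K \<and> {z. root_of_unity z} \<subseteq> K}"

text \<open>The Galois group Gal(Q^ab/Q): field automorphisms of Q^ab (they fix Q automatically),
  normalised to be the identity outside Q^ab.\<close>
definition Gal_ab :: "(complex \<Rightarrow> complex) set" where
  "Gal_ab = {\<sigma>. bij_betw \<sigma> Qab Qab \<and> (\<forall>x\<in>Qab. \<forall>y\<in>Qab. \<sigma> (x + y) = \<sigma> x + \<sigma> y \<and> \<sigma> (x * y) = \<sigma> x * \<sigma> y)
        \<and> (\<forall>z. z \<notin> Qab \<longrightarrow> \<sigma> z = z)}"

text \<open>The subgroup \<H>: there is an integer f with \<sigma>(\<xi>) = \<xi>^(p^f) for all roots of unity \<xi>
  of order prime to p (for f < 0, \<xi>^(p^f) means the unique \<eta> of order prime to p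
  with \<eta>^(p^(-f)) = \<xi>).\<close>
definition Hgal :: "nat \<Rightarrow> (complex \<Rightarrow> complex) set" where
  "Hgal p = {\<sigma>\<in>Gal_ab. \<exists>f::int. \<forall>\<xi>. \<forall>n::nat. n > 0 \<and> coprime n p \<and> \<xi> ^ n = 1 \<longrightarrow>
      (if f \<ge> 0 then \<sigma> \<xi> = \<xi> ^ (p ^ nat f) else (\<sigma> \<xi>) ^ (p ^ nat (- f)) = \<xi>)}"

definition mtrace :: "complex mat \<Rightarrow> complex" where
  "mtrace A = (\<Sum>i<dim_row A. A $$ (i, i))"

definition is_rep :: "('g, 'b) monoid_scheme \<Rightarrow> 'g set \<Rightarrow> nat \<Rightarrow> ('g \<Rightarrow> complex mat) \<Rightarrow> bool" where
  "is_rep G N n \<rho> \<longleftrightarrow> (\<forall>x\<in>N. \<rho> x \<in> carrier_mat n n) \<and> \<rho> \<one>\<^bsub>G\<^esub> = 1\<^sub>m n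
     \<and> (\<forall>x\<in>N. \<forall>y\<in>N. \<rho> (x \<otimes>\<^bsub>G\<^esub> y) = \<rho> x * \<rho> y)"

definition is_cvsubspace :: "nat \<Rightarrow> complex vec set \<Rightarrow> bool" where
  "is_cvsubspace n W \<longleftrightarrow> W \<subseteq> carrier_vec n \<and> 0\<^sub>v n \<in> W
     \<and> (\<forall>v\<in>W. \<forall>w\<in>W. v + w \<in> W) \<and> (\<forall>c. \<forall>v\<in>W. c \<cdot>\<^sub>v v \<in> W)"

definition irr_rep :: "('g, 'b) monoid_scheme \<Rightarrow> 'g set \<Rightarrow> nat \<Rightarrow> ('g \<Rightarrow> complex mat) \<Rightarrow> bool" where
  "irr_rep G N n \<rho> \<longleftrightarrow> n > 0 \<and> is_rep G N n \<rho> \<and>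
     (\<forall>W. is_cvsubspace n W \<and> (\<forall>x\<in>N. \<forall>w\<in>W. \<rho> x *\<^sub>v w \<in> W) \<longrightarrow> W = {0\<^sub>v n} \<or> W = carrier_vec n)"

text \<open>\<theta> \<in> Irr(N) (values only relevant on N).\<close>
definition irr_char :: "('g, 'b) monoid_scheme \<Rightarrow> 'g set \<Rightarrow> ('g \<Rightarrow> complex) \<Rightarrow> bool" where
  "irr_char G N \<theta> \<longleftrightarrow> (\<exists>n \<rho>. irr_rep G N n \<rho> \<and> (\<forall>x\<in>N. \<theta> x = mtrace (\<rho> x)))"

definition char_act :: "('g, 'b) monoid_scheme \<Rightarrow> ('g \<Rightarrow> complex) \<Rightarrow> 'g \<Rightarrow> (complex \<Rightarrow> complex) \<Rightarrow> 'g \<Rightarrow> complex" where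
  "char_act G \<theta> g \<sigma> = (\<lambda>n. \<sigma> (\<theta> (g \<otimes>\<^bsub>G\<^esub> n \<otimes>\<^bsub>G\<^esub> inv\<^bsub>G\<^esub> g)))"

definition fixes_char :: "('g, 'b) monoid_scheme \<Rightarrow> 'g set \<Rightarrow> ('g \<Rightarrow> complex) \<Rightarrow> 'g \<Rightarrow> (complex \<Rightarrow> complex) \<Rightarrow> bool" where
  "fixes_char G N \<theta> g \<sigma> \<longleftrightarrow> (\<forall>n\<in>N. char_act G \<theta> g \<sigma> n = \<theta> n)"

definition stab_pair :: "nat \<Rightarrow> ('g, 'b) monoid_scheme \<Rightarrow> 'g set \<Rightarrow> 'g set \<Rightarrow> ('g \<Rightarrow> complex) \<Rightarrow> ('g \<times> (complex \<Rightarrow> complex)) set" where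
  "stab_pair p G H N \<theta> = {(x, \<sigma>). x \<in> H \<and> \<sigma> \<in> Hgal p \<and> fixes_char G N \<theta> x \<sigma>}"

definition stab :: "('g, 'b) monoid_scheme \<Rightarrow> 'g set \<Rightarrow> 'g set \<Rightarrow> ('g \<Rightarrow> complex) \<Rightarrow> 'g set" where
  "stab G H N \<theta> = {x \<in> H. fixes_char G N \<theta> x id}"

definition stab_orbit :: "nat \<Rightarrow> ('g, 'b) monoid_scheme \<Rightarrow> 'g set \<Rightarrow> 'g set \<Rightarrow> ('g \<Rightarrow> complex) \<Rightarrow> 'g set" where
  "stab_orbit p G H N \<theta> = {g \<in> H. \<exists>\<sigma>\<in>Hgal p. \<forall>n\<in>N. char_act G \<theta> g id n = \<sigma> (\<theta> n)}"

definition H_triple :: "nat \<Rightarrow> ('g, 'b) monoid_scheme \<Rightarrow> 'g set \<Rightarrow> 'g set \<Rightarrow> ('g \<Rightarrow> complex) \<Rightarrow> bool" where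
  "H_triple p G H N \<theta> \<longleftrightarrow> subgroup H G \<and> N \<lhd> (G\<lparr>carrier := H\<rparr>) \<and> irr_char G N \<theta>
      \<and> stab_orbit p G H N \<theta> = H"

definition centralizer_in :: "('g, 'b) monoid_scheme \<Rightarrow> 'g set \<Rightarrow> 'g set" where
  "centralizer_in G N = {g \<in> carrier G. \<forall>n\<in>N. g \<otimes>\<^bsub>G\<^esub> n = n \<otimes>\<^bsub>G\<^esub> g}"

definition proj_rep :: "('g, 'b) monoid_scheme \<Rightarrow> 'g set \<Rightarrow> nat \<Rightarrow> ('g \<Rightarrow> complex mat) \<Rightarrow> ('g \<Rightarrow> 'g \<Rightarrow> complex) \<Rightarrow> bool" where
  "proj_rep G S d P \<alpha> \<longleftrightarrow> (\<forall>x\<in>S. P x \<in> carrier_mat d d \<and> invertible_mat (P x))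
     \<and> (\<forall>x\<in>S. \<forall>y\<in>S. P x * P y = \<alpha> x y \<cdot>\<^sub>m P (x \<otimes>\<^bsub>G\<^esub> y))"

definition assoc_proj :: "('g, 'b) monoid_scheme \<Rightarrow> 'g set \<Rightarrow> 'g set \<Rightarrow> ('g \<Rightarrow> complex) \<Rightarrow> nat \<Rightarrow> ('g \<Rightarrow> complex mat) \<Rightarrow> bool" where
  "assoc_proj G S N \<theta> d P \<longleftrightarrow> is_rep G N d P \<and> (\<forall>n\<in>N. mtrace (P n) = \<theta> n)
     \<and> (\<forall>n\<in>N. \<forall>g\<in>S. P (n \<otimes>\<^bsub>G\<^esub> g) = P n * P g \<and> P (g \<otimes>\<^bsub>G\<^esub> n) = P g * P n)"

definition mu_cond :: "('g, 'b) monoid_scheme \<Rightarrow> 'g set \<Rightarrow> 'g set \<Rightarrow> nat \<Rightarrow> ('g \<Rightarrow> complex mat)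
     \<Rightarrow> 'g \<times> (complex \<Rightarrow> complex) \<Rightarrow> ('g \<Rightarrow> complex) \<Rightarrow> bool" where
  "mu_cond G S N d P a \<mu> \<longleftrightarrow> \<mu> \<in> extensional S \<and> (\<forall>y\<in>S. \<mu> y \<noteq> 0) \<and> \<mu> \<one>\<^bsub>G\<^esub> = 1
     \<and> (\<forall>y\<in>S. \<forall>n\<in>N. \<mu> (n \<otimes>\<^bsub>G\<^esub> y) = \<mu> y)
     \<and> (\<exists>L Linv. L \<in> carrier_mat d d \<and> Linv \<in> carrier_mat d d \<and> L * Linv = 1\<^sub>m d \<and> Linv * L = 1\<^sub>m d
          \<and> (\<forall>y\<in>S. map_mat (snd a) (P (fst a \<otimes>\<^bsub>G\<^esub> y \<otimes>\<^bsub>G\<^esub> inv\<^bsub>G\<^esub> (fst a)))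
                     = \<mu> y \<cdot>\<^sub>m (Linv * P y * L)))"

definition mu :: "('g, 'b) monoid_scheme \<Rightarrow> 'g set \<Rightarrow> 'g set \<Rightarrow> nat \<Rightarrow> ('g \<Rightarrow> complex mat)
     \<Rightarrow> 'g \<times> (complex \<Rightarrow> complex) \<Rightarrow> 'g \<Rightarrow> complex" where
  "mu G S N d P a = (THE \<mu>. mu_cond G S N d P a \<mu>)"

text \<open>T is a complete set of representatives of the (right) cosets of H_\<theta> \<times> {1} in A.\<close>
definition coset_transversal :: "('g, 'b) monoid_scheme \<Rightarrow> 'g set \<Rightarrow> ('g \<times> (complex \<Rightarrow> complex)) set
     \<Rightarrow> ('g \<times> (complex \<Rightarrow> complex)) set \<Rightarrow> bool" where
  "coset_transversal G K A T \<longleftrightarrow> T \<subseteq> A \<and>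
     (\<forall>a\<in>A. \<exists>!t. t \<in> T \<and> (\<exists>h\<in>K. a = (h \<otimes>\<^bsub>G\<^esub> fst t, snd t)))"

end

theory Submission
  imports Defs "Jordan_Normal_Form.Spectral_Radius"
begin


lemma schur_irr:
  assumes irr: "irr_rep G N n \<rho>" and Z: "Z \<in> carrier_mat n n"
    and comm: "\<forall>x\<in>N. Z * \<rho> x = \<rho> x * Z"
  shows "\<exists>c. Z = c \<cdot>\<^sub>m 1\<^sub>m n"
proof -
  have n: "n > 0" and rep: "is_rep G N n \<rho>" using irr unfolding irr_rep_def by auto
  have rc: "\<And>x. x \<in> N \<Longrightarrow> \<rho> x \<in> carrier_mat n n" using rep unfolding is_rep_def by auto
  from spectrum_non_empty[OF Z n] obtain c where "eigenvalue Z c" unfolding spectrum_def by auto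
  then obtain v where ev: "eigenvector Z v c" unfolding eigenvalue_def by auto
  hence v: "v \<in> carrier_vec n" "v \<noteq> 0\<^sub>v n" "Z *\<^sub>v v = c \<cdot>\<^sub>v v" using Z unfolding eigenvector_def by auto
  define W where "W = {w \<in> carrier_vec n. Z *\<^sub>v w = c \<cdot>\<^sub>v w}"
  have sub: "is_cvsubspace n W" unfolding is_cvsubspace_def W_def
  proof (intro conjI ballI allI)
    show "0\<^sub>v n \<in> {w \<in> carrier_vec n. Z *\<^sub>v w = c \<cdot>\<^sub>v w}" using Z by auto
  next
    fix v w assume "v \<in> {w \<in> carrier_vec n. Z *\<^sub>v w = c \<cdot>\<^sub>v w}" "w \<in> {w \<in> carrier_vec n. Z *\<^sub>v w = c \<cdot>\<^sub>v w}"
    then show "v + w \<in> {w \<in> carrier_vec n. Z *\<^sub>v w = c \<cdot>\<^sub>v w}" using Z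
      by (auto simp: mult_add_distrib_mat_vec smult_add_distrib_vec)
  next
    fix d v assume "v \<in> {w \<in> carrier_vec n. Z *\<^sub>v w = c \<cdot>\<^sub>v w}"
    then show "d \<cdot>\<^sub>v v \<in> {w \<in> carrier_vec n. Z *\<^sub>v w = c \<cdot>\<^sub>v w}" using Z
      by (auto simp: mult_mat_vec smult_smult_assoc mult.commute)
  qed auto
  have inv: "\<forall>x\<in>N. \<forall>w\<in>W. \<rho> x *\<^sub>v w \<in> W"
  proof (intro ballI)
    fix x w assume x: "x \<in> N" and w: "w \<in> W"
    have "Z *\<^sub>v (\<rho> x *\<^sub>v w) = (Z * \<rho> x) *\<^sub>v w" using Z rc[OF x] w unfolding W_def by auto
    also have "\<dots> = (\<rho> x * Z) *\<^sub>v w" using comm x by auto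
    also have "\<dots> = \<rho> x *\<^sub>v (Z *\<^sub>v w)" using Z rc[OF x] w unfolding W_def by auto
    also have "\<dots> = c \<cdot>\<^sub>v (\<rho> x *\<^sub>v w)" using w rc[OF x] unfolding W_def by (auto simp: mult_mat_vec)
    finally show "\<rho> x *\<^sub>v w \<in> W" using w rc[OF x] unfolding W_def by auto
  qed
  have "W = {0\<^sub>v n} \<or> W = carrier_vec n" using irr sub inv unfolding irr_rep_def by blast
  moreover have "v \<in> W" using v unfolding W_def by auto
  ultimately have W: "W = carrier_vec n" using v by auto
  show ?thesis
  proof (intro exI eq_matI)
    fix i j assume i: "i < dim_row (c \<cdot>\<^sub>m 1\<^sub>m n)" and j: "j < dim_col (c \<cdot>\<^sub>m 1\<^sub>m n)"
    hence ij: "i < n" "j < n" by auto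
    have "unit_vec n j \<in> W" using W by auto
    hence "Z *\<^sub>v unit_vec n j = c \<cdot>\<^sub>v unit_vec n j" unfolding W_def by auto
    hence "(Z *\<^sub>v unit_vec n j) $ i = (c \<cdot>\<^sub>v unit_vec n j) $ i" by simp
    moreover have "(Z *\<^sub>v unit_vec n j) $ i = Z $$ (i, j)" using Z ij
      by (simp add: scalar_prod_right_unit)
    ultimately show "Z $$ (i, j) = (c \<cdot>\<^sub>m 1\<^sub>m n) $$ (i, j)" using ij by (auto simp: unit_vec_def)
  qed (use Z in auto)
qed


lemma intertwiner_inv:
  assumes irr: "irr_rep G N n \<rho>" and pc: "\<forall>x\<in>N. \<pi> x \<in> carrier_mat n n"
    and T: "T \<in> carrier_mat n n" and nz: "T \<noteq> 0\<^sub>m n n"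
    and int: "\<forall>x\<in>N. T * \<pi> x = \<rho> x * T"
  shows "\<exists>Ti. Ti \<in> carrier_mat n n \<and> T * Ti = 1\<^sub>m n \<and> Ti * T = 1\<^sub>m n"
proof -
  have rep: "is_rep G N n \<rho>" using irr unfolding irr_rep_def by auto
  have rc: "\<And>x. x \<in> N \<Longrightarrow> \<rho> x \<in> carrier_mat n n" using rep unfolding is_rep_def by auto
  define W where "W = (\<lambda>v. T *\<^sub>v v) ` carrier_vec n"
  have sub: "is_cvsubspace n W" unfolding is_cvsubspace_def W_def
  proof (intro conjI ballI allI)
    show "(\<lambda>v. T *\<^sub>v v) ` carrier_vec n \<subseteq> carrier_vec n" using T by auto
    show "0\<^sub>v n \<in> (\<lambda>v. T *\<^sub>v v) ` carrier_vec n" using T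
      by (intro image_eqI[of _ _ "0\<^sub>v n"]) auto
  next
    fix v w assume "v \<in> (\<lambda>v. T *\<^sub>v v) ` carrier_vec n" "w \<in> (\<lambda>v. T *\<^sub>v v) ` carrier_vec n"
    then obtain v' w' where "v' \<in> carrier_vec n" "w' \<in> carrier_vec n" "v = T *\<^sub>v v'" "w = T *\<^sub>v w'" by auto
    then show "v + w \<in> (\<lambda>v. T *\<^sub>v v) ` carrier_vec n" using T
      by (intro image_eqI[of _ _ "v' + w'"]) (auto simp: mult_add_distrib_mat_vec)
  next
    fix d v assume "v \<in> (\<lambda>v. T *\<^sub>v v) ` carrier_vec n"
    then obtain v' where "v' \<in> carrier_vec n" "v = T *\<^sub>v v'" by auto
    then show "d \<cdot>\<^sub>v v \<in> (\<lambda>v. T *\<^sub>v v) ` carrier_vec n" using T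
      by (intro image_eqI[of _ _ "d \<cdot>\<^sub>v v'"]) (auto simp: mult_mat_vec)
  qed
  have inv: "\<forall>x\<in>N. \<forall>w\<in>W. \<rho> x *\<^sub>v w \<in> W"
  proof (intro ballI)
    fix x w assume x: "x \<in> N" and w: "w \<in> W"
    then obtain v where v: "v \<in> carrier_vec n" "w = T *\<^sub>v v" unfolding W_def by auto
    have "\<rho> x *\<^sub>v w = (\<rho> x * T) *\<^sub>v v" using v T rc[OF x] by auto
    also have "\<dots> = (T * \<pi> x) *\<^sub>v v" using int x by auto
    also have "\<dots> = T *\<^sub>v (\<pi> x *\<^sub>v v)" using v T pc x by auto
    finally show "\<rho> x *\<^sub>v w \<in> W" unfolding W_def using pc x v by auto
  qed
  have "W = {0\<^sub>v n} \<or> W = carrier_vec n" using irr sub inv unfolding irr_rep_def by blast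
  moreover have "W \<noteq> {0\<^sub>v n}"
  proof
    assume W0: "W = {0\<^sub>v n}"
    have "T = 0\<^sub>m n n"
    proof (rule eq_matI)
      fix i j assume "i < dim_row (0\<^sub>m n n :: complex mat)" "j < dim_col (0\<^sub>m n n :: complex mat)"
      hence ij: "i < n" "j < n" by auto
      have "T *\<^sub>v unit_vec n j \<in> W" unfolding W_def by auto
      hence "T *\<^sub>v unit_vec n j = 0\<^sub>v n" using W0 by auto
      hence "(T *\<^sub>v unit_vec n j) $ i = 0" using ij by simp
      moreover have "(T *\<^sub>v unit_vec n j) $ i = T $$ (i, j)" using T ij by simp
      ultimately show "T $$ (i, j) = 0\<^sub>m n n $$ (i, j)" using ij by simp
    qed (use T in auto)
    with nz show False by simp
  qed
  ultimately have W: "W = carrier_vec n" by simp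
  have "\<forall>j. \<exists>v. j < n \<longrightarrow> v \<in> carrier_vec n \<and> T *\<^sub>v v = unit_vec n j"
  proof (intro allI)
    fix j show "\<exists>v. j < n \<longrightarrow> v \<in> carrier_vec n \<and> T *\<^sub>v v = unit_vec n j"
    proof (cases "j < n")
      case True
      have "unit_vec n j \<in> W" using W by simp
      then show ?thesis unfolding W_def by auto
    qed simp
  qed
  then obtain vf where vf: "\<And>j. j < n \<Longrightarrow> vf j \<in> carrier_vec n \<and> T *\<^sub>v vf j = unit_vec n j"
    by metis
  define Ti where "Ti = mat n n (\<lambda>(i, j). vf j $ i)"
  have Ti: "Ti \<in> carrier_mat n n" unfolding Ti_def by simp
  have "T * Ti = 1\<^sub>m n"
  proof (rule eq_matI)
    fix i j assume "i < dim_row (1\<^sub>m n :: complex mat)" "j < dim_col (1\<^sub>m n :: complex mat)"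
    hence ij: "i < n" "j < n" by auto
    have cj: "col Ti j = vf j" using vf[OF ij(2)] ij unfolding Ti_def by (auto simp: col_def)
    have "(T * Ti) $$ (i, j) = row T i \<bullet> col Ti j" using T Ti ij by simp
    also have "\<dots> = (T *\<^sub>v vf j) $ i" using cj T ij by simp
    also have "\<dots> = 1\<^sub>m n $$ (i, j)" using vf[OF ij(2)] ij by simp
    finally show "(T * Ti) $$ (i, j) = 1\<^sub>m n $$ (i, j)" .
  qed (use T Ti in auto)
  moreover then have "Ti * T = 1\<^sub>m n" using mat_mult_left_right_inverse[OF T Ti] by simp
  ultimately show ?thesis using Ti by blast
qed


context group begin

lemma subgroup_lmult_bij:
  assumes "subgroup N G" "y \<in> N"
  shows "bij_betw (\<lambda>x. y \<otimes> x) N N"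
proof -
  have sub: "\<And>x. x \<in> N \<Longrightarrow> x \<in> carrier G" using assms(1) subgroup.subset by blast
  have mc: "\<And>x z. x \<in> N \<Longrightarrow> z \<in> N \<Longrightarrow> x \<otimes> z \<in> N" using subgroup.m_closed[OF assms(1)] by simp
  have ic: "\<And>x. x \<in> N \<Longrightarrow> inv x \<in> N" using subgroup.m_inv_closed[OF assms(1)] by simp
  show ?thesis unfolding bij_betw_def
  proof
    show "inj_on (\<lambda>x. y \<otimes> x) N"
    proof (rule inj_onI)
      fix x x' assume "x \<in> N" "x' \<in> N" "y \<otimes> x = y \<otimes> x'"
      then show "x = x'" using l_cancel[of y x x'] sub assms(2) by simp
    qed
    show "(\<lambda>x. y \<otimes> x) ` N = N"
    proof
      show "(\<lambda>x. y \<otimes> x) ` N \<subseteq> N" using mc assms(2) by auto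
      show "N \<subseteq> (\<lambda>x. y \<otimes> x) ` N"
      proof
        fix z assume z: "z \<in> N"
        have "y \<otimes> (inv y \<otimes> z) = z" using sub[OF z] sub[OF assms(2)] by (simp add: m_assoc[symmetric])
        moreover have "inv y \<otimes> z \<in> N" using mc ic assms(2) z by simp
        ultimately show "z \<in> (\<lambda>x. y \<otimes> x) ` N" by force
      qed
    qed
  qed
qed

end

definition avg :: "('g, 'b) monoid_scheme \<Rightarrow> 'g set \<Rightarrow> ('g \<Rightarrow> complex mat) \<Rightarrow> ('g \<Rightarrow> complex mat)
   \<Rightarrow> nat \<Rightarrow> nat \<Rightarrow> nat \<Rightarrow> nat \<Rightarrow> complex mat" where
  "avg G N \<rho> \<pi> n m j k = mat n m (\<lambda>(i, l). \<Sum>x\<in>N. \<rho> x $$ (i, j) * \<pi> (inv\<^bsub>G\<^esub> x) $$ (k, l))"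

context group begin

lemma avg_intertwines:
  assumes sub: "subgroup N G" and fin: "finite N"
    and r: "is_rep G N n \<rho>" and p: "is_rep G N m \<pi>" and y: "y \<in> N" and jk: "j < n" "k < m"
  shows "\<rho> y * avg G N \<rho> \<pi> n m j k = avg G N \<rho> \<pi> n m j k * \<pi> y"
proof -
  have sc: "\<And>x. x \<in> N \<Longrightarrow> x \<in> carrier G" using subgroup.subset[OF sub] by auto
  have ic: "\<And>x. x \<in> N \<Longrightarrow> inv x \<in> N" using subgroup.m_inv_closed[OF sub] by simp
  have mc: "\<And>x z. x \<in> N \<Longrightarrow> z \<in> N \<Longrightarrow> x \<otimes> z \<in> N" using subgroup.m_closed[OF sub] by simp
  have rc: "\<And>x. x \<in> N \<Longrightarrow> \<rho> x \<in> carrier_mat n n" and rm: "\<And>x z. x \<in> N \<Longrightarrow> z \<in> N \<Longrightarrow> \<rho> (x \<otimes> z) = \<rho> x * \<rho> z"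
    using r unfolding is_rep_def by auto
  have pc: "\<And>x. x \<in> N \<Longrightarrow> \<pi> x \<in> carrier_mat m m" and pm: "\<And>x z. x \<in> N \<Longrightarrow> z \<in> N \<Longrightarrow> \<pi> (x \<otimes> z) = \<pi> x * \<pi> z"
    using p unfolding is_rep_def by auto
  show ?thesis
  proof (rule eq_matI)
    fix i l assume "i < dim_row (avg G N \<rho> \<pi> n m j k * \<pi> y)" "l < dim_col (avg G N \<rho> \<pi> n m j k * \<pi> y)"
    hence il: "i < n" "l < m" using pc[OF y] unfolding avg_def by auto
    have "(\<rho> y * avg G N \<rho> \<pi> n m j k) $$ (i, l) = (\<Sum>s<n. \<rho> y $$ (i, s) * (\<Sum>x\<in>N. \<rho> x $$ (s, j) * \<pi> (inv x) $$ (k, l)))"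
      using il rc[OF y] unfolding avg_def by (simp add: scalar_prod_def atLeast0LessThan)
    also have "\<dots> = (\<Sum>s<n. \<Sum>x\<in>N. \<rho> y $$ (i, s) * (\<rho> x $$ (s, j) * \<pi> (inv x) $$ (k, l)))"
      by (simp add: sum_distrib_left)
    also have "\<dots> = (\<Sum>x\<in>N. \<Sum>s<n. \<rho> y $$ (i, s) * (\<rho> x $$ (s, j) * \<pi> (inv x) $$ (k, l)))"
      by (rule sum.swap)
    also have "\<dots> = (\<Sum>x\<in>N. (\<Sum>s<n. \<rho> y $$ (i, s) * \<rho> x $$ (s, j)) * \<pi> (inv x) $$ (k, l))"
      by (simp add: sum_distrib_right mult.assoc)
    also have "\<dots> = (\<Sum>x\<in>N. \<rho> (y \<otimes> x) $$ (i, j) * \<pi> (inv x) $$ (k, l))"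
    proof (rule sum.cong[OF refl])
      fix x assume x: "x \<in> N"
      show "(\<Sum>s<n. \<rho> y $$ (i, s) * \<rho> x $$ (s, j)) * \<pi> (inv x) $$ (k, l) = \<rho> (y \<otimes> x) $$ (i, j) * \<pi> (inv x) $$ (k, l)"
        using rm[OF y x] rc[OF y] rc[OF x] il jk by (simp add: scalar_prod_def atLeast0LessThan)
    qed
    also have "\<dots> = (\<Sum>x\<in>N. \<rho> x $$ (i, j) * \<pi> (inv x \<otimes> y) $$ (k, l))"
    proof -
      have "(\<Sum>x\<in>N. \<rho> x $$ (i, j) * \<pi> (inv x \<otimes> y) $$ (k, l)) = (\<Sum>x\<in>N. \<rho> (y \<otimes> x) $$ (i, j) * \<pi> (inv (y \<otimes> x) \<otimes> y) $$ (k, l))"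
        using sum.reindex_bij_betw[OF subgroup_lmult_bij[OF sub y], of "\<lambda>x. \<rho> x $$ (i, j) * \<pi> (inv x \<otimes> y) $$ (k, l)"]
        by simp
      also have "\<dots> = (\<Sum>x\<in>N. \<rho> (y \<otimes> x) $$ (i, j) * \<pi> (inv x) $$ (k, l))"
        using sc y by (intro sum.cong[OF refl]) (simp add: inv_mult_group m_assoc)
      finally show ?thesis by simp
    qed
    also have "\<dots> = (\<Sum>s<m. (\<Sum>x\<in>N. \<rho> x $$ (i, j) * \<pi> (inv x) $$ (k, s)) * \<pi> y $$ (s, l))"
    proof -
      have "(\<Sum>s<m. (\<Sum>x\<in>N. \<rho> x $$ (i, j) * \<pi> (inv x) $$ (k, s)) * \<pi> y $$ (s, l)) 
         = (\<Sum>s<m. \<Sum>x\<in>N. \<rho> x $$ (i, j) * (\<pi> (inv x) $$ (k, s) * \<pi> y $$ (s, l)))"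
        by (simp add: sum_distrib_right mult.assoc)
      also have "\<dots> = (\<Sum>x\<in>N. \<Sum>s<m. \<rho> x $$ (i, j) * (\<pi> (inv x) $$ (k, s) * \<pi> y $$ (s, l)))"
        by (rule sum.swap)
      also have "\<dots> = (\<Sum>x\<in>N. \<rho> x $$ (i, j) * (\<Sum>s<m. \<pi> (inv x) $$ (k, s) * \<pi> y $$ (s, l)))"
        by (simp add: sum_distrib_left)
      also have "\<dots> = (\<Sum>x\<in>N. \<rho> x $$ (i, j) * \<pi> (inv x \<otimes> y) $$ (k, l))"
      proof (rule sum.cong[OF refl])
        fix x assume x: "x \<in> N"
        show "\<rho> x $$ (i, j) * (\<Sum>s<m. \<pi> (inv x) $$ (k, s) * \<pi> y $$ (s, l)) = \<rho> x $$ (i, j) * \<pi> (inv x \<otimes> y) $$ (k, l)"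
          using pm[OF ic[OF x] y] pc[OF ic[OF x]] pc[OF y] il jk by (simp add: scalar_prod_def atLeast0LessThan)
      qed
      finally show ?thesis by simp
    qed
    also have "\<dots> = (avg G N \<rho> \<pi> n m j k * \<pi> y) $$ (i, l)"
      using il pc[OF y] unfolding avg_def by (simp add: scalar_prod_def atLeast0LessThan)
    finally show "(\<rho> y * avg G N \<rho> \<pi> n m j k) $$ (i, l) = (avg G N \<rho> \<pi> n m j k * \<pi> y) $$ (i, l)" .
  qed (use rc[OF y] pc[OF y] in \<open>auto simp: avg_def\<close>)
qed

end


lemma mtrace_one[simp]: "mtrace (1\<^sub>m n) = of_nat n"
  unfolding mtrace_def by simp

lemma mtrace_smult_one: "mtrace (c \<cdot>\<^sub>m 1\<^sub>m n) = c * of_nat n"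
  unfolding mtrace_def by simp

context group begin

lemma char_orth:
  assumes sub: "subgroup N G" and fin: "finite N" and irr: "irr_rep G N n \<rho>"
  shows "(\<Sum>x\<in>N. mtrace (\<rho> x) * mtrace (\<rho> (inv x))) = of_nat (card N)"
proof -
  have r: "is_rep G N n \<rho>" and n: "n > 0" using irr unfolding irr_rep_def by auto
  have sc: "\<And>x. x \<in> N \<Longrightarrow> x \<in> carrier G" using subgroup.subset[OF sub] by auto
  have ic: "\<And>x. x \<in> N \<Longrightarrow> inv x \<in> N" using subgroup.m_inv_closed[OF sub] by simp
  have rc: "\<And>x. x \<in> N \<Longrightarrow> \<rho> x \<in> carrier_mat n n" and rm: "\<And>x z. x \<in> N \<Longrightarrow> z \<in> N \<Longrightarrow> \<rho> (x \<otimes> z) = \<rho> x * \<rho> z"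
    and r1: "\<rho> \<one> = 1\<^sub>m n"
    using r unfolding is_rep_def by auto
  define A where "A = (\<lambda>j k. avg G N \<rho> \<rho> n n j k)"
  have Ac: "\<And>j k. A j k \<in> carrier_mat n n" unfolding A_def avg_def by simp
  have key: "of_nat n * A j k $$ (j, k) = (if j = k then of_nat (card N) else 0)" if jk: "j < n" "k < n" for j k
  proof -
    have "\<exists>c. A j k = c \<cdot>\<^sub>m 1\<^sub>m n"
      using schur_irr[OF irr Ac] avg_intertwines[OF sub fin r r _ jk] unfolding A_def by metis
    then obtain c where c: "A j k = c \<cdot>\<^sub>m 1\<^sub>m n" by blast
    have "mtrace (A j k) = (\<Sum>i<n. \<Sum>x\<in>N. \<rho> x $$ (i, j) * \<rho> (inv x) $$ (k, i))"
      unfolding mtrace_def A_def avg_def by simp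
    also have "\<dots> = (\<Sum>x\<in>N. \<Sum>i<n. \<rho> (inv x) $$ (k, i) * \<rho> x $$ (i, j))"
      by (subst sum.swap) (simp add: mult.commute)
    also have "\<dots> = (\<Sum>x\<in>N. (if k = j then 1 else 0))"
    proof (rule sum.cong[OF refl])
      fix x assume x: "x \<in> N"
      have "\<rho> (inv x) * \<rho> x = 1\<^sub>m n" using rm[OF ic[OF x] x] sc[OF x] r1 by simp
      hence "(\<rho> (inv x) * \<rho> x) $$ (k, j) = (if k = j then 1 else 0)" using jk by simp
      thus "(\<Sum>i<n. \<rho> (inv x) $$ (k, i) * \<rho> x $$ (i, j)) = (if k = j then 1 else 0)"
        using rc[OF x] rc[OF ic[OF x]] jk by (simp add: scalar_prod_def atLeast0LessThan)
    qed
    finally have tr: "mtrace (A j k) = (if j = k then of_nat (card N) else 0)" by auto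
    have "mtrace (A j k) = c * of_nat n" using c mtrace_smult_one by simp
    moreover have "A j k $$ (j, k) = (if j = k then c else 0)" using c jk by simp
    ultimately show ?thesis using tr by (auto simp: mult.commute)
  qed
  have "(\<Sum>x\<in>N. mtrace (\<rho> x) * mtrace (\<rho> (inv x))) = (\<Sum>x\<in>N. \<Sum>j<n. \<Sum>k<n. \<rho> x $$ (j, j) * \<rho> (inv x) $$ (k, k))"
  proof (rule sum.cong[OF refl])
    fix x assume x: "x \<in> N"
    show "mtrace (\<rho> x) * mtrace (\<rho> (inv x)) = (\<Sum>j<n. \<Sum>k<n. \<rho> x $$ (j, j) * \<rho> (inv x) $$ (k, k))"
      using rc[OF x] rc[OF ic[OF x]] unfolding mtrace_def apply (simp add: sum_distrib_left sum_distrib_right) by (rule sum.swap)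
  qed
  also have "\<dots> = (\<Sum>j<n. \<Sum>x\<in>N. \<Sum>k<n. \<rho> x $$ (j, j) * \<rho> (inv x) $$ (k, k))"
    by (rule sum.swap)
  also have "\<dots> = (\<Sum>j<n. \<Sum>k<n. \<Sum>x\<in>N. \<rho> x $$ (j, j) * \<rho> (inv x) $$ (k, k))"
    by (rule sum.cong[OF refl], rule sum.swap)
  also have "\<dots> = (\<Sum>j<n. \<Sum>k<n. A j k $$ (j, k))"
    unfolding A_def avg_def by (intro sum.cong refl) simp
  finally have eq: "(\<Sum>x\<in>N. mtrace (\<rho> x) * mtrace (\<rho> (inv x))) = (\<Sum>j<n. \<Sum>k<n. A j k $$ (j, k))" .
  have "of_nat n * (\<Sum>j<n. \<Sum>k<n. A j k $$ (j, k)) = (\<Sum>j<n. \<Sum>k<n. of_nat n * A j k $$ (j, k))"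
    by (simp add: sum_distrib_left)
  also have "\<dots> = (\<Sum>j<n. \<Sum>k<n. (if j = k then of_nat (card N) else 0))"
    using key by simp
  also have "\<dots> = of_nat n * of_nat (card N)" by simp
  finally have "of_nat n * (\<Sum>j<n. \<Sum>k<n. A j k $$ (j, k)) = (of_nat n * of_nat (card N) :: complex)" .
  with n have "(\<Sum>j<n. \<Sum>k<n. A j k $$ (j, k)) = of_nat (card N)" by simp
  with eq show ?thesis by simp
qed


lemma char_equiv:
  assumes sub: "subgroup N G" and fin: "finite N" and irr: "irr_rep G N n \<rho>"
    and p: "is_rep G N m \<pi>" and tr: "\<forall>x\<in>N. mtrace (\<pi> x) = mtrace (\<rho> x)"
  shows "m = n \<and> (\<exists>T Ti. T \<in> carrier_mat n n \<and> Ti \<in> carrier_mat n n \<and> T * Ti = 1\<^sub>m n \<and> Ti * T = 1\<^sub>m n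
            \<and> (\<forall>x\<in>N. T * \<pi> x = \<rho> x * T))"
proof -
  have r: "is_rep G N n \<rho>" and n: "n > 0" using irr unfolding irr_rep_def by auto
  have one: "\<one> \<in> N" using subgroup.one_closed[OF sub] by simp
  have ic: "\<And>x. x \<in> N \<Longrightarrow> inv x \<in> N" using subgroup.m_inv_closed[OF sub] by simp
  have rc: "\<And>x. x \<in> N \<Longrightarrow> \<rho> x \<in> carrier_mat n n" and r1: "\<rho> \<one> = 1\<^sub>m n"
    using r unfolding is_rep_def by auto
  have pc: "\<And>x. x \<in> N \<Longrightarrow> \<pi> x \<in> carrier_mat m m" and p1: "\<pi> \<one> = 1\<^sub>m m"
    using p unfolding is_rep_def by auto
  have "(of_nat m :: complex) = of_nat n" using tr one r1 p1 by auto
  hence mn: "m = n" by simp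
  define A where "A = (\<lambda>j k. avg G N \<rho> \<pi> n n j k)"
  have Ac: "\<And>j k. A j k \<in> carrier_mat n n" unfolding A_def avg_def by simp
  have "(\<Sum>x\<in>N. mtrace (\<rho> x) * mtrace (\<pi> (inv x))) = (\<Sum>x\<in>N. \<Sum>j<n. \<Sum>k<n. \<rho> x $$ (j, j) * \<pi> (inv x) $$ (k, k))"
  proof (rule sum.cong[OF refl])
    fix x assume x: "x \<in> N"
    show "mtrace (\<rho> x) * mtrace (\<pi> (inv x)) = (\<Sum>j<n. \<Sum>k<n. \<rho> x $$ (j, j) * \<pi> (inv x) $$ (k, k))"
      using rc[OF x] pc[OF ic[OF x]] mn unfolding mtrace_def
      apply (simp add: sum_distrib_left sum_distrib_right) by (rule sum.swap)
  qed
  also have "\<dots> = (\<Sum>j<n. \<Sum>x\<in>N. \<Sum>k<n. \<rho> x $$ (j, j) * \<pi> (inv x) $$ (k, k))"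
    by (rule sum.swap)
  also have "\<dots> = (\<Sum>j<n. \<Sum>k<n. \<Sum>x\<in>N. \<rho> x $$ (j, j) * \<pi> (inv x) $$ (k, k))"
    by (rule sum.cong[OF refl], rule sum.swap)
  also have "\<dots> = (\<Sum>j<n. \<Sum>k<n. A j k $$ (j, k))"
    unfolding A_def avg_def by (intro sum.cong refl) simp
  finally have eq: "(\<Sum>x\<in>N. mtrace (\<rho> x) * mtrace (\<pi> (inv x))) = (\<Sum>j<n. \<Sum>k<n. A j k $$ (j, k))" .
  have "(\<Sum>x\<in>N. mtrace (\<rho> x) * mtrace (\<pi> (inv x))) = (\<Sum>x\<in>N. mtrace (\<rho> x) * mtrace (\<rho> (inv x)))"
    using tr ic by (intro sum.cong refl) simp
  also have "\<dots> = of_nat (card N)" by (rule char_orth[OF sub fin irr])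
  finally have "(\<Sum>j<n. \<Sum>k<n. A j k $$ (j, k)) = of_nat (card N)" using eq by simp
  moreover have "card N > 0" using fin one by (auto simp: card_gt_0_iff)
  ultimately have "(\<Sum>j<n. \<Sum>k<n. A j k $$ (j, k)) \<noteq> 0" by simp
  then obtain j where j: "j < n" "(\<Sum>k<n. A j k $$ (j, k)) \<noteq> 0" using sum.not_neutral_contains_not_neutral by blast
  then obtain k where k: "k < n" "A j k $$ (j, k) \<noteq> 0" using sum.not_neutral_contains_not_neutral by blast
  have nz: "A j k \<noteq> 0\<^sub>m n n" using j k by auto
  have int: "\<forall>x\<in>N. A j k * \<pi> x = \<rho> x * A j k"
    using avg_intertwines[OF sub fin r p[unfolded mn] _ j(1) k(1)] unfolding A_def by simp
  from intertwiner_inv[OF irr _ Ac nz int] pc mn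
  obtain Ti where "Ti \<in> carrier_mat n n" "A j k * Ti = 1\<^sub>m n" "Ti * A j k = 1\<^sub>m n" by auto
  with Ac int mn show ?thesis by blast
qed

end


lemma subfield_Inter: assumes h: "\<And>K. K \<in> F \<Longrightarrow> is_subfield K" shows "is_subfield (\<Inter>F)"
proof -
  have a: "\<And>K. K \<in> F \<Longrightarrow> 0 \<in> K \<and> 1 \<in> K" using h unfolding is_subfield_def by simp
  have b: "\<And>K x y. K \<in> F \<Longrightarrow> x \<in> K \<Longrightarrow> y \<in> K \<Longrightarrow> x + y \<in> K \<and> x * y \<in> K" using h unfolding is_subfield_def by simp
  have c: "\<And>K x. K \<in> F \<Longrightarrow> x \<in> K \<Longrightarrow> - x \<in> K \<and> inverse x \<in> K" using h unfolding is_subfield_def by simp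
  show ?thesis unfolding is_subfield_def using a b c by auto
qed

lemma Qab_subfield: "is_subfield Qab"
  unfolding Qab_def by (rule subfield_Inter) simp

lemma Qab_root: "root_of_unity z \<Longrightarrow> z \<in> Qab"
  unfolding Qab_def by auto

lemma Qab_0[simp]: "0 \<in> Qab" and Qab_1[simp]: "1 \<in> Qab"
  using Qab_subfield unfolding is_subfield_def by auto

lemma Qab_add[simp]: "x \<in> Qab \<Longrightarrow> y \<in> Qab \<Longrightarrow> x + y \<in> Qab"
  and Qab_mult[simp]: "x \<in> Qab \<Longrightarrow> y \<in> Qab \<Longrightarrow> x * y \<in> Qab"
  and Qab_uminus[simp]: "x \<in> Qab \<Longrightarrow> - x \<in> Qab"
  and Qab_inverse[simp]: "x \<in> Qab \<Longrightarrow> inverse x \<in> Qab"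
  using Qab_subfield unfolding is_subfield_def by auto

lemma Qab_divide[simp]: "x \<in> Qab \<Longrightarrow> y \<in> Qab \<Longrightarrow> x / y \<in> Qab"
  by (simp add: divide_inverse)

lemma Qab_sum[simp]: "(\<And>i. i \<in> F \<Longrightarrow> f i \<in> Qab) \<Longrightarrow> sum f F \<in> Qab"
  by (induction F rule: infinite_finite_induct) auto

lemma root_of_unity_nz: "root_of_unity z \<Longrightarrow> z \<noteq> 0"
  unfolding root_of_unity_def by (auto simp: zero_power)

locale galois =
  fixes \<sigma> :: "complex \<Rightarrow> complex"
  assumes gal: "\<sigma> \<in> Gal_ab"
begin

lemma bij: "bij_betw \<sigma> Qab Qab"
  and add: "x \<in> Qab \<Longrightarrow> y \<in> Qab \<Longrightarrow> \<sigma> (x + y) = \<sigma> x + \<sigma> y"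
  and mult: "x \<in> Qab \<Longrightarrow> y \<in> Qab \<Longrightarrow> \<sigma> (x * y) = \<sigma> x * \<sigma> y"
  and out: "z \<notin> Qab \<Longrightarrow> \<sigma> z = z"
  using gal unfolding Gal_ab_def by auto

lemma closed[simp]: "x \<in> Qab \<Longrightarrow> \<sigma> x \<in> Qab"
  using bij bij_betwE by blast

lemma inj: "\<sigma> x = \<sigma> y \<Longrightarrow> x = y"
proof -
  assume e: "\<sigma> x = \<sigma> y"
  show "x = y"
  proof (cases "x \<in> Qab"; cases "y \<in> Qab")
    assume "x \<in> Qab" "y \<in> Qab" thus ?thesis using e bij unfolding bij_betw_def inj_on_def by blast
  next
    assume "x \<in> Qab" "y \<notin> Qab" thus ?thesis using e out[of y] closed[of x] by auto
  next
    assume "x \<notin> Qab" "y \<in> Qab" thus ?thesis using e out[of x] closed[of y] by auto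
  next
    assume "x \<notin> Qab" "y \<notin> Qab" thus ?thesis using e out by auto
  qed
qed

lemma zero[simp]: "\<sigma> 0 = 0"
proof -
  have "\<sigma> (0 + 0) = \<sigma> 0 + \<sigma> 0" using add[of 0 0] by simp
  thus ?thesis by simp
qed

lemma one[simp]: "\<sigma> 1 = 1"
proof -
  have "\<sigma> (1 * 1) = \<sigma> 1 * \<sigma> 1" using mult[of 1 1] by simp
  hence "\<sigma> 1 * (\<sigma> 1 - 1) = 0" by (simp add: algebra_simps)
  moreover have "\<sigma> 1 \<noteq> 0" using inj[of 1 0] by auto
  ultimately show ?thesis by simp
qed

lemma nz: "x \<noteq> 0 \<Longrightarrow> \<sigma> x \<noteq> 0"
  using inj[of x 0] by auto

lemma sum: "(\<And>i. i \<in> F \<Longrightarrow> f i \<in> Qab) \<Longrightarrow> \<sigma> (sum f F) = (\<Sum>i\<in>F. \<sigma> (f i))"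
proof (induction F rule: infinite_finite_induct)
  case (insert x F)
  then show ?case by (simp add: add)
qed auto

lemma inverse: "x \<in> Qab \<Longrightarrow> \<sigma> (inverse x) = inverse (\<sigma> x)"
proof (cases "x = 0")
  case False
  assume x: "x \<in> Qab"
  have "\<sigma> (inverse x) * \<sigma> x = 1" using mult[of "inverse x" x] x False by simp
  thus ?thesis by (metis inverse_unique mult.commute)
qed simp

lemma divide: "x \<in> Qab \<Longrightarrow> y \<in> Qab \<Longrightarrow> \<sigma> (x / y) = \<sigma> x / \<sigma> y"
  by (simp add: divide_inverse mult inverse)

end

definition qmat :: "complex mat \<Rightarrow> bool" where
  "qmat A \<longleftrightarrow> (\<forall>i<dim_row A. \<forall>j<dim_col A. A $$ (i, j) \<in> Qab)"

lemma qmat_mult: "qmat A \<Longrightarrow> qmat B \<Longrightarrow> dim_col A = dim_row B \<Longrightarrow> qmat (A * B)"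
  unfolding qmat_def
proof (intro allI impI)
  fix i j assume a: "\<forall>i<dim_row A. \<forall>j<dim_col A. A $$ (i, j) \<in> Qab" "\<forall>i<dim_row B. \<forall>j<dim_col B. B $$ (i, j) \<in> Qab"
    "dim_col A = dim_row B" and ij: "i < dim_row (A * B)" "j < dim_col (A * B)"
  have "(\<Sum>k = 0..<dim_row B. A $$ (i, k) * B $$ (k, j)) \<in> Qab"
    using a ij by (intro Qab_sum) auto
  thus "(A * B) $$ (i, j) \<in> Qab" using ij a by (simp add: scalar_prod_def)
qed

lemma qmat_smult: "c \<in> Qab \<Longrightarrow> qmat A \<Longrightarrow> qmat (c \<cdot>\<^sub>m A)"
  unfolding qmat_def by auto

lemma qmat_one: "qmat (1\<^sub>m n)"
  unfolding qmat_def by auto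

context galois begin

lemma map_mult: assumes "qmat A" "qmat B" "dim_col A = dim_row B"
  shows "map_mat \<sigma> (A * B) = map_mat \<sigma> A * map_mat \<sigma> B"
proof (rule eq_matI)
  fix i j assume ij: "i < dim_row (map_mat \<sigma> A * map_mat \<sigma> B)" "j < dim_col (map_mat \<sigma> A * map_mat \<sigma> B)"
  have "\<sigma> (\<Sum>k = 0..<dim_row B. A $$ (i, k) * B $$ (k, j)) = (\<Sum>k = 0..<dim_row B. \<sigma> (A $$ (i, k) * B $$ (k, j)))"
    using assms ij unfolding qmat_def by (intro sum) auto
  also have "\<dots> = (\<Sum>k = 0..<dim_row B. \<sigma> (A $$ (i, k)) * \<sigma> (B $$ (k, j)))"
    using assms ij unfolding qmat_def by (intro sum.cong refl mult) auto
  finally show "map_mat \<sigma> (A * B) $$ (i, j) = (map_mat \<sigma> A * map_mat \<sigma> B) $$ (i, j)"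
    using ij assms by (simp add: scalar_prod_def)
qed auto

lemma map_smult: assumes "c \<in> Qab" "qmat A"
  shows "map_mat \<sigma> (c \<cdot>\<^sub>m A) = \<sigma> c \<cdot>\<^sub>m map_mat \<sigma> A"
proof (rule eq_matI)
  fix i j assume ij: "i < dim_row (\<sigma> c \<cdot>\<^sub>m map_mat \<sigma> A)" "j < dim_col (\<sigma> c \<cdot>\<^sub>m map_mat \<sigma> A)"
  hence "A $$ (i, j) \<in> Qab" using assms(2) unfolding qmat_def by simp
  thus "map_mat \<sigma> (c \<cdot>\<^sub>m A) $$ (i, j) = (\<sigma> c \<cdot>\<^sub>m map_mat \<sigma> A) $$ (i, j)"
    using ij mult[OF assms(1)] by simp
qed simp_all

lemma map_one: "map_mat \<sigma> (1\<^sub>m n) = 1\<^sub>m n"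
proof (rule eq_matI)
  fix i j assume ij: "i < dim_row (1\<^sub>m n :: complex mat)" "j < dim_col (1\<^sub>m n :: complex mat)"
  thus "map_mat \<sigma> (1\<^sub>m n) $$ (i, j) = 1\<^sub>m n $$ (i, j)" by simp
qed simp_all

lemma map_trace: assumes "qmat A" "A \<in> carrier_mat n n" shows "mtrace (map_mat \<sigma> A) = \<sigma> (mtrace A)"
proof -
  have "\<sigma> (\<Sum>i<n. A $$ (i, i)) = (\<Sum>i<n. \<sigma> (A $$ (i, i)))"
    using assms unfolding qmat_def by (intro sum) auto
  thus ?thesis using assms(2) unfolding mtrace_def by simp
qed

end


context group begin

lemma inv_cancel_l1[simp]: "a \<in> carrier G \<Longrightarrow> z \<in> carrier G \<Longrightarrow> a \<otimes> (inv a \<otimes> z) = z"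
  by (simp add: m_assoc[symmetric])
lemma inv_cancel_l2[simp]: "a \<in> carrier G \<Longrightarrow> z \<in> carrier G \<Longrightarrow> inv a \<otimes> (a \<otimes> z) = z"
  by (simp add: m_assoc[symmetric])

lemma normal_facts:
  assumes C: "subgroup C G" and Nn: "N \<lhd> (G\<lparr>carrier := C\<rparr>)"
  shows "subgroup N G" "N \<subseteq> C" "\<And>c n. c \<in> C \<Longrightarrow> n \<in> N \<Longrightarrow> c \<otimes> n \<otimes> inv c \<in> N"
proof -
  have s: "subgroup N (G\<lparr>carrier := C\<rparr>)" using normal_imp_subgroup[OF Nn] .
  show "subgroup N G" using incl_subgroup[OF C s] .
  show "N \<subseteq> C" using subgroup.subset[OF s] by simp
  fix c n assume c: "c \<in> C" and n: "n \<in> N"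
  have "c \<otimes>\<^bsub>G\<lparr>carrier := C\<rparr>\<^esub> n \<otimes>\<^bsub>G\<lparr>carrier := C\<rparr>\<^esub> inv\<^bsub>G\<lparr>carrier := C\<rparr>\<^esub> c \<in> N"
    using normal.inv_op_closed2[OF Nn, of c n] c n by simp
  thus "c \<otimes> n \<otimes> inv c \<in> N" using m_inv_consistent[OF C c] by simp
qed

lemma fixes_char_iff: "fixes_char G N \<theta> x \<sigma> \<longleftrightarrow> (\<forall>n\<in>N. \<sigma> (\<theta> (x \<otimes> n \<otimes> inv x)) = \<theta> n)"
  unfolding fixes_char_def char_act_def by simp

lemma stab_iff: "x \<in> stab G H N \<theta> \<longleftrightarrow> x \<in> H \<and> (\<forall>n\<in>N. \<theta> (x \<otimes> n \<otimes> inv x) = \<theta> n)"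
  unfolding stab_def fixes_char_iff by simp

lemma stab_subgroup:
  assumes H: "subgroup H G" and Ns: "N \<subseteq> carrier G"
    and cc: "\<And>c n. c \<in> H \<Longrightarrow> n \<in> N \<Longrightarrow> c \<otimes> n \<otimes> inv c \<in> N"
  shows "subgroup (stab G H N \<theta>) G"
proof (rule subgroupI)
  have Hc: "\<And>x. x \<in> H \<Longrightarrow> x \<in> carrier G" using subgroup.subset[OF H] by auto
  have nc: "\<And>x. x \<in> N \<Longrightarrow> x \<in> carrier G" using Ns by auto
  show "stab G H N \<theta> \<subseteq> carrier G" using Hc unfolding stab_def by auto
  have "\<one> \<in> stab G H N \<theta>" using subgroup.one_closed[OF H] nc unfolding stab_iff by simp
  thus "stab G H N \<theta> \<noteq> {}" by auto
next
  have Hc: "\<And>x. x \<in> H \<Longrightarrow> x \<in> carrier G" using subgroup.subset[OF H] by auto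
  have nc: "\<And>x. x \<in> N \<Longrightarrow> x \<in> carrier G" using Ns by auto
  fix a assume a: "a \<in> stab G H N \<theta>"
  hence aH: "a \<in> H" and af: "\<And>n. n \<in> N \<Longrightarrow> \<theta> (a \<otimes> n \<otimes> inv a) = \<theta> n" unfolding stab_iff by auto
  have iH: "inv a \<in> H" using subgroup.m_inv_closed[OF H aH] .
  show "inv a \<in> stab G H N \<theta>" unfolding stab_iff
  proof (intro conjI ballI iH)
    fix n assume n: "n \<in> N"
    have w: "inv a \<otimes> n \<otimes> inv (inv a) \<in> N" using cc[OF iH n] .
    have "a \<otimes> (inv a \<otimes> n \<otimes> inv (inv a)) \<otimes> inv a = n" using Hc[OF aH] nc[OF n] by (simp add: m_assoc)
    hence "\<theta> n = \<theta> (inv a \<otimes> n \<otimes> inv (inv a))" using af[OF w] by simp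
    thus "\<theta> (inv a \<otimes> n \<otimes> inv (inv a)) = \<theta> n" by simp
  qed
next
  have Hc: "\<And>x. x \<in> H \<Longrightarrow> x \<in> carrier G" using subgroup.subset[OF H] by auto
  have nc: "\<And>x. x \<in> N \<Longrightarrow> x \<in> carrier G" using Ns by auto
  fix a b assume a: "a \<in> stab G H N \<theta>" and b: "b \<in> stab G H N \<theta>"
  hence aH: "a \<in> H" and af: "\<And>n. n \<in> N \<Longrightarrow> \<theta> (a \<otimes> n \<otimes> inv a) = \<theta> n"
    and bH: "b \<in> H" and bf: "\<And>n. n \<in> N \<Longrightarrow> \<theta> (b \<otimes> n \<otimes> inv b) = \<theta> n" unfolding stab_iff by auto
  show "a \<otimes> b \<in> stab G H N \<theta>" unfolding stab_iff
  proof (intro conjI ballI)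
    show "a \<otimes> b \<in> H" using subgroup.m_closed[OF H aH bH] .
    fix n assume n: "n \<in> N"
    have "a \<otimes> b \<otimes> n \<otimes> inv (a \<otimes> b) = a \<otimes> (b \<otimes> n \<otimes> inv b) \<otimes> inv a"
      using Hc[OF aH] Hc[OF bH] nc[OF n] by (simp add: m_assoc inv_mult_group)
    thus "\<theta> (a \<otimes> b \<otimes> n \<otimes> inv (a \<otimes> b)) = \<theta> n" using af[OF cc[OF bH n]] bf[OF n] by simp
  qed
qed

lemma stab_conj:
  assumes H: "subgroup H G" and Ns: "N \<subseteq> carrier G"
    and cc: "\<And>c n. c \<in> H \<Longrightarrow> n \<in> N \<Longrightarrow> c \<otimes> n \<otimes> inv c \<in> N"
    and x: "x \<in> H" and \<sigma>: "\<sigma> \<in> Gal_ab" and fx: "fixes_char G N \<theta> x \<sigma>"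
    and h: "h \<in> stab G H N \<theta>"
  shows "x \<otimes> h \<otimes> inv x \<in> stab G H N \<theta>"
proof -
  interpret galois \<sigma> using \<sigma> by unfold_locales
  have Hc: "\<And>x. x \<in> H \<Longrightarrow> x \<in> carrier G" using subgroup.subset[OF H] by auto
  have nc: "\<And>x. x \<in> N \<Longrightarrow> x \<in> carrier G" using Ns by auto
  have hH: "h \<in> H" and hf: "\<And>n. n \<in> N \<Longrightarrow> \<theta> (h \<otimes> n \<otimes> inv h) = \<theta> n" using h unfolding stab_iff by auto
  have xf: "\<And>n. n \<in> N \<Longrightarrow> \<sigma> (\<theta> (x \<otimes> n \<otimes> inv x)) = \<theta> n" using fx unfolding fixes_char_iff by auto
  have ixH: "inv x \<in> H" using subgroup.m_inv_closed[OF H x] .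
  show ?thesis unfolding stab_iff
  proof (intro conjI ballI)
    show "x \<otimes> h \<otimes> inv x \<in> H" using subgroup.m_closed[OF H subgroup.m_closed[OF H x hH] ixH] .
    fix m assume m: "m \<in> N"
    define n where "n = inv x \<otimes> m \<otimes> inv (inv x)"
    have n: "n \<in> N" unfolding n_def using cc[OF ixH m] .
    define w where "w = h \<otimes> n \<otimes> inv h"
    have w: "w \<in> N" unfolding w_def using cc[OF hH n] .
    have e1: "x \<otimes> h \<otimes> inv x \<otimes> m \<otimes> inv (x \<otimes> h \<otimes> inv x) = x \<otimes> w \<otimes> inv x"
      unfolding w_def n_def using Hc[OF x] Hc[OF hH] nc[OF m] by (simp add: m_assoc inv_mult_group)
    have e2: "x \<otimes> n \<otimes> inv x = m"
      unfolding n_def using Hc[OF x] nc[OF m] by (simp add: m_assoc)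
    have "\<sigma> (\<theta> (x \<otimes> w \<otimes> inv x)) = \<theta> w" using xf[OF w] .
    also have "\<dots> = \<theta> n" unfolding w_def using hf[OF n] .
    also have "\<dots> = \<sigma> (\<theta> m)" using xf[OF n] e2 by simp
    finally have "\<theta> (x \<otimes> w \<otimes> inv x) = \<theta> m" using inj by blast
    thus "\<theta> (x \<otimes> h \<otimes> inv x \<otimes> m \<otimes> inv (x \<otimes> h \<otimes> inv x)) = \<theta> m" using e1 by simp
  qed
qed

lemma fixes_char_mult:
  assumes H: "subgroup H G" and Ns: "N \<subseteq> carrier G"
    and cc: "\<And>c n. c \<in> H \<Longrightarrow> n \<in> N \<Longrightarrow> c \<otimes> n \<otimes> inv c \<in> N"
    and x: "x \<in> H" and fx: "fixes_char G N \<theta> x \<sigma>"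
    and k: "k \<in> stab G H N \<theta>"
  shows "fixes_char G N \<theta> (k \<otimes> x) \<sigma>"
  unfolding fixes_char_iff
proof
  have Hc: "\<And>x. x \<in> H \<Longrightarrow> x \<in> carrier G" using subgroup.subset[OF H] by auto
  have nc: "\<And>x. x \<in> N \<Longrightarrow> x \<in> carrier G" using Ns by auto
  have kH: "k \<in> H" and kf: "\<And>n. n \<in> N \<Longrightarrow> \<theta> (k \<otimes> n \<otimes> inv k) = \<theta> n" using k unfolding stab_iff by auto
  have xf: "\<And>n. n \<in> N \<Longrightarrow> \<sigma> (\<theta> (x \<otimes> n \<otimes> inv x)) = \<theta> n" using fx unfolding fixes_char_iff by auto
  fix n assume n: "n \<in> N"
  have "k \<otimes> x \<otimes> n \<otimes> inv (k \<otimes> x) = k \<otimes> (x \<otimes> n \<otimes> inv x) \<otimes> inv k"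
    using Hc[OF kH] Hc[OF x] nc[OF n] by (simp add: m_assoc inv_mult_group)
  thus "\<sigma> (\<theta> (k \<otimes> x \<otimes> n \<otimes> inv (k \<otimes> x))) = \<theta> n" using kf[OF cc[OF x n]] xf[OF n] by simp
qed

end

lemma Hgal_Gal: "Hgal p \<subseteq> Gal_ab"
  unfolding Hgal_def by auto

lemma id_Hgal: "id \<in> Hgal p"
proof -
  have "id \<in> Gal_ab" unfolding Gal_ab_def by (auto simp: bij_betw_def)
  moreover have "\<forall>\<xi>::complex. \<forall>n::nat. n > 0 \<and> coprime n p \<and> \<xi> ^ n = 1 \<longrightarrow>
      (if (0::int) \<ge> 0 then id \<xi> = \<xi> ^ (p ^ nat 0) else (id \<xi>) ^ (p ^ nat (- 0)) = \<xi>)" by simp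
  ultimately show ?thesis unfolding Hgal_def by blast
qed


lemma smult_smult_mat[simp]: "a \<cdot>\<^sub>m (b \<cdot>\<^sub>m A) = (a * b :: complex) \<cdot>\<^sub>m A"
  by (rule eq_matI) auto

lemma one_smult_mat'[simp]: "(1::complex) \<cdot>\<^sub>m A = A"
  by (rule eq_matI) auto

lemma smult_one_mult: "A \<in> carrier_mat n m \<Longrightarrow> (c \<cdot>\<^sub>m 1\<^sub>m n) * A = (c::complex) \<cdot>\<^sub>m A"
  by (simp add: mult_smult_assoc_mat[of _ n n] left_mult_one_mat)

lemma mult_smult_one: "A \<in> carrier_mat m n \<Longrightarrow> A * (c \<cdot>\<^sub>m 1\<^sub>m n) = (c::complex) \<cdot>\<^sub>m A"
  using mult_smult_distrib[of A m n "1\<^sub>m n" n c] by simp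

lemma smultm_cancel:
  assumes A: "(A :: complex mat) \<in> carrier_mat n m" and nz: "A \<noteq> 0\<^sub>m n m" and e: "a \<cdot>\<^sub>m A = (b::complex) \<cdot>\<^sub>m A"
  shows "a = b"
proof -
  have "\<exists>i j. i < n \<and> j < m \<and> A $$ (i, j) \<noteq> 0"
  proof (rule ccontr)
    assume "\<not> ?thesis"
    hence z: "\<And>i j. i < n \<Longrightarrow> j < m \<Longrightarrow> A $$ (i, j) = 0" by blast
    have "A = 0\<^sub>m n m"
    proof (rule eq_matI)
      fix i j assume "i < dim_row (0\<^sub>m n m :: complex mat)" "j < dim_col (0\<^sub>m n m :: complex mat)"
      thus "A $$ (i, j) = 0\<^sub>m n m $$ (i, j)" using z by simp
    qed (use A in simp_all)
    with nz show False by simp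
  qed
  then obtain i j where ij: "i < n" "j < m" "A $$ (i, j) \<noteq> 0" by blast
  have "(a \<cdot>\<^sub>m A) $$ (i, j) = (b \<cdot>\<^sub>m A) $$ (i, j)" using e by simp
  hence "a * A $$ (i, j) = b * A $$ (i, j)" using ij A by simp
  thus ?thesis using ij by simp
qed

lemma inv_nonzero:
  assumes A: "(A :: complex mat) \<in> carrier_mat n n" and B: "B \<in> carrier_mat n n" and e: "A * B = 1\<^sub>m n" and n: "n > 0"
  shows "A \<noteq> 0\<^sub>m n n"
proof
  assume "A = 0\<^sub>m n n"
  hence "A * B = 0\<^sub>m n n" using B by simp
  hence I: "1\<^sub>m n = (0\<^sub>m n n :: complex mat)" using e by simp
  have "(1\<^sub>m n :: complex mat) $$ (0, 0) = 1" using n by simp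
  moreover have "(0\<^sub>m n n :: complex mat) $$ (0, 0) = 0" using n by simp
  ultimately show False using I by simp
qed

lemma smult_one_eq:
  assumes "c \<cdot>\<^sub>m 1\<^sub>m n = (1\<^sub>m n :: complex mat)" "n > 0"
  shows "c = 1"
proof -
  have "(c \<cdot>\<^sub>m 1\<^sub>m n) $$ (0, 0) = (1\<^sub>m n :: complex mat) $$ (0, 0)" using assms(1) by simp
  thus ?thesis using assms(2) by simp
qed

definition ipair :: "nat \<Rightarrow> complex mat \<Rightarrow> complex mat \<Rightarrow> bool" where
  "ipair n A B \<longleftrightarrow> A \<in> carrier_mat n n \<and> B \<in> carrier_mat n n \<and> A * B = 1\<^sub>m n \<and> B * A = 1\<^sub>m n"

lemma invertible_ipair:
  assumes A: "A \<in> carrier_mat n n" and inv: "invertible_mat A"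
  shows "\<exists>B. ipair n A B"
proof -
  from inv have "\<exists>B. inverts_mat A B \<and> inverts_mat B A" unfolding invertible_mat_def by (rule conjunct2)
  then obtain B where i1: "inverts_mat A B" and i2: "inverts_mat B A" by (elim exE conjE)
  have AB: "A * B = 1\<^sub>m (dim_row A)" using i1 unfolding inverts_mat_def .
  have BA: "B * A = 1\<^sub>m (dim_row B)" using i2 unfolding inverts_mat_def .
  have rA: "dim_row A = n" and cA: "dim_col A = n" using A by auto
  have "dim_col B = dim_col (A * B)" by simp
  also have "\<dots> = dim_col (1\<^sub>m (dim_row A) :: complex mat)" by (simp only: AB)
  also have "\<dots> = n" using rA by simp
  finally have cB: "dim_col B = n" .
  have "dim_row B = dim_col (1\<^sub>m (dim_row B) :: complex mat)" by simp
  also have "\<dots> = dim_col (B * A)" by (simp only: BA)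
  also have "\<dots> = n" using cA by simp
  finally have rB: "dim_row B = n" .
  have Bc: "B \<in> carrier_mat n n" by (rule carrier_matI[OF rB cB])
  have AB': "A * B = 1\<^sub>m n" using AB rA by (simp only:)
  have BA': "B * A = 1\<^sub>m n" using BA rB by (simp only:)
  have "ipair n A B" unfolding ipair_def using A Bc AB' BA' by (intro conjI)
  thus ?thesis by (rule exI)
qed


locale pset = group +
  fixes C N \<theta> d P \<alpha>
  assumes fin: "finite (carrier G)"
    and C: "subgroup C G" and Nn: "N \<lhd> (G\<lparr>carrier := C\<rparr>)"
    and irr: "irr_char G N \<theta>"
    and pr: "proj_rep G (stab G C N \<theta>) d P \<alpha>"
    and ap: "assoc_proj G (stab G C N \<theta>) N \<theta> d P"
    and Pq: "\<forall>x\<in>stab G C N \<theta>. \<forall>i<d. \<forall>j<d. P x $$ (i, j) \<in> Qab"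
    and ar: "\<forall>x\<in>stab G C N \<theta>. \<forall>y\<in>stab G C N \<theta>. root_of_unity (\<alpha> x y)"
begin

abbreviation "S \<equiv> stab G C N \<theta>"

lemma NG: "subgroup N G" and NC: "N \<subseteq> C" and cc: "\<And>c n. c \<in> C \<Longrightarrow> n \<in> N \<Longrightarrow> c \<otimes> n \<otimes> inv c \<in> N"
  using normal_facts[OF C Nn] by auto

lemma Cc: "x \<in> C \<Longrightarrow> x \<in> carrier G"
  using subgroup.subset[OF C] by auto

lemma Nc: "x \<in> N \<Longrightarrow> x \<in> carrier G"
  using NC Cc by auto

lemma Ncar: "N \<subseteq> carrier G"
  using Nc by auto

lemma SC: "x \<in> S \<Longrightarrow> x \<in> C"
  unfolding stab_def by auto

lemma Sc: "x \<in> S \<Longrightarrow> x \<in> carrier G"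
  using SC Cc by auto

lemma Ssub: "subgroup S G"
  using stab_subgroup[OF C Ncar cc] .

lemma S_mult: "x \<in> S \<Longrightarrow> y \<in> S \<Longrightarrow> x \<otimes> y \<in> S"
  using subgroup.m_closed[OF Ssub] by simp

lemma S_inv: "x \<in> S \<Longrightarrow> inv x \<in> S"
  using subgroup.m_inv_closed[OF Ssub] by simp

lemma S_one: "\<one> \<in> S"
  using subgroup.one_closed[OF Ssub] by simp

lemma N_mult: "x \<in> N \<Longrightarrow> y \<in> N \<Longrightarrow> x \<otimes> y \<in> N"
  using subgroup.m_closed[OF NG] by simp

lemma N_inv: "x \<in> N \<Longrightarrow> inv x \<in> N"
  using subgroup.m_inv_closed[OF NG] by simp

lemma N_one: "\<one> \<in> N"
  using subgroup.one_closed[OF NG] by simp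

lemma finN: "finite N"
  using finite_subset[OF Ncar fin] .

lemma Pc: "x \<in> S \<Longrightarrow> P x \<in> carrier_mat d d"
  using pr unfolding proj_rep_def by auto

lemma Pinvertible: "x \<in> S \<Longrightarrow> invertible_mat (P x)"
  using pr unfolding proj_rep_def by auto

lemma Pmult: "x \<in> S \<Longrightarrow> y \<in> S \<Longrightarrow> P x * P y = \<alpha> x y \<cdot>\<^sub>m P (x \<otimes> y)"
  using pr unfolding proj_rep_def by auto

lemma Prep: "is_rep G N d P"
  using ap unfolding assoc_proj_def by auto

lemma P1: "P \<one> = 1\<^sub>m d"
  using Prep unfolding is_rep_def by auto

lemma PN: "x \<in> N \<Longrightarrow> y \<in> N \<Longrightarrow> P (x \<otimes> y) = P x * P y"
  using Prep unfolding is_rep_def by auto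

lemma PNc: "x \<in> N \<Longrightarrow> P x \<in> carrier_mat d d"
  using Prep unfolding is_rep_def by auto

lemma Ptr: "n \<in> N \<Longrightarrow> mtrace (P n) = \<theta> n"
  using ap unfolding assoc_proj_def by auto

lemma Pl: "n \<in> N \<Longrightarrow> g \<in> S \<Longrightarrow> P (n \<otimes> g) = P n * P g"
  using ap unfolding assoc_proj_def by auto

lemma Pr: "n \<in> N \<Longrightarrow> g \<in> S \<Longrightarrow> P (g \<otimes> n) = P g * P n"
  using ap unfolding assoc_proj_def by auto

lemma Pqmat: assumes x: "x \<in> S" shows "qmat (P x)"
proof -
  have "dim_row (P x) = d" "dim_col (P x) = d" using Pc[OF x] by auto
  thus ?thesis using Pq x unfolding qmat_def by simp
qed

lemma alpha_Qab: "x \<in> S \<Longrightarrow> y \<in> S \<Longrightarrow> \<alpha> x y \<in> Qab"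
  using ar Qab_root by auto

lemma alpha_nz: "x \<in> S \<Longrightarrow> y \<in> S \<Longrightarrow> \<alpha> x y \<noteq> 0"
  using ar root_of_unity_nz by auto

lemma mtrace_comm:
  assumes "A \<in> carrier_mat n n" "B \<in> carrier_mat n n"
  shows "mtrace (A * B) = mtrace (B * A)"
proof -
  have "mtrace (A * B) = (\<Sum>i<n. \<Sum>k<n. A $$ (i, k) * B $$ (k, i))"
    using assms unfolding mtrace_def by (simp add: scalar_prod_def atLeast0LessThan)
  also have "\<dots> = (\<Sum>k<n. \<Sum>i<n. B $$ (k, i) * A $$ (i, k))"
    by (subst sum.swap) (simp add: mult.commute)
  also have "\<dots> = mtrace (B * A)"
    using assms unfolding mtrace_def by (simp add: scalar_prod_def atLeast0LessThan)
  finally show ?thesis .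
qed

lemma NS: "N \<subseteq> S"
proof
  fix n assume n: "n \<in> N"
  show "n \<in> S" unfolding stab_iff
  proof (intro conjI ballI)
    show "n \<in> C" using n NC by auto
    fix m assume m: "m \<in> N"
    have "P (n \<otimes> m \<otimes> inv n) = P n * P m * P (inv n)"
      using PN[OF N_mult[OF n m] N_inv[OF n]] PN[OF n m] by simp
    hence "mtrace (P (n \<otimes> m \<otimes> inv n)) = mtrace (P n * (P m * P (inv n)))"
      using PNc[OF n] PNc[OF m] PNc[OF N_inv[OF n]] by simp
    also have "\<dots> = mtrace ((P m * P (inv n)) * P n)"
      using PNc[OF n] PNc[OF m] PNc[OF N_inv[OF n]] by (intro mtrace_comm) auto
    also have "(P m * P (inv n)) * P n = P m * (P (inv n) * P n)"
      using PNc[OF n] PNc[OF m] PNc[OF N_inv[OF n]] by simp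
    also have "P (inv n) * P n = 1\<^sub>m d"
      using PN[OF N_inv[OF n] n] Nc[OF n] P1 by simp
    finally have "mtrace (P (n \<otimes> m \<otimes> inv n)) = mtrace (P m)"
      using PNc[OF m] by simp
    thus "\<theta> (n \<otimes> m \<otimes> inv n) = \<theta> m"
      using Ptr[OF m] Ptr[OF cc[OF _ m]] n NC by auto
  qed
qed


lemma mult_d[simp]: "A \<in> carrier_mat d d \<Longrightarrow> B \<in> carrier_mat d d \<Longrightarrow> A * B \<in> carrier_mat d d"
  by simp

lemma smult_d[simp]: "A \<in> carrier_mat d d \<Longrightarrow> c \<cdot>\<^sub>m A \<in> carrier_mat d d"
  by simp

lemma assoc_d[simp]: "A \<in> carrier_mat d d \<Longrightarrow> B \<in> carrier_mat d d \<Longrightarrow> E \<in> carrier_mat d d \<Longrightarrow>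
  A * B * (E :: complex mat) = A * (B * E)"
  by (rule assoc_mult_mat)

lemma cancel_d[simp]: "A * B = 1\<^sub>m d \<Longrightarrow> A \<in> carrier_mat d d \<Longrightarrow> B \<in> carrier_mat d d \<Longrightarrow> W \<in> carrier_mat d d \<Longrightarrow>
  A * (B * (W :: complex mat)) = W"
  using assoc_mult_mat[of A d d B d W d] by simp

lemma assoc_use:
  assumes e: "A1 * Y = (Z :: complex mat)" and A1: "A1 \<in> carrier_mat n n" and Y: "Y \<in> carrier_mat n n"
    and W: "W \<in> carrier_mat n m"
  shows "A1 * (Y * W) = Z * W"
  using assoc_mult_mat[OF A1 Y W] e by simp

lemma rho_ex: "\<exists>\<rho>. irr_rep G N d \<rho> \<and> (\<forall>x\<in>N. mtrace (\<rho> x) = \<theta> x) \<and>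
   (\<exists>T Ti. ipair d T Ti \<and> (\<forall>x\<in>N. T * P x = \<rho> x * T))"
proof -
  from irr obtain n0 \<rho> where r: "irr_rep G N n0 \<rho>" and tr: "\<forall>x\<in>N. \<theta> x = mtrace (\<rho> x)"
    unfolding irr_char_def by blast
  have tr': "\<forall>x\<in>N. mtrace (P x) = mtrace (\<rho> x)" using tr Ptr by simp
  from char_equiv[OF NG finN r Prep tr'] obtain T Ti where
    dn: "d = n0" and T: "T \<in> carrier_mat n0 n0" "Ti \<in> carrier_mat n0 n0" "T * Ti = 1\<^sub>m n0" "Ti * T = 1\<^sub>m n0"
    and int: "\<forall>x\<in>N. T * P x = \<rho> x * T" by blast
  have "ipair d T Ti" unfolding ipair_def using T dn by simp
  thus ?thesis using r dn tr int by auto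
qed

lemma dpos: "d > 0"
  using rho_ex unfolding irr_rep_def by auto

lemma schurP:
  assumes Y: "Y \<in> carrier_mat d d" and comm: "\<forall>n\<in>N. Y * P n = P n * Y"
  shows "\<exists>c. Y = c \<cdot>\<^sub>m 1\<^sub>m d"
proof -
  from rho_ex obtain \<rho> T Ti where r: "irr_rep G N d \<rho>" and ip: "ipair d T Ti"
    and int: "\<forall>x\<in>N. T * P x = \<rho> x * T" by blast
  have T: "T \<in> carrier_mat d d" "Ti \<in> carrier_mat d d" "T * Ti = 1\<^sub>m d" "Ti * T = 1\<^sub>m d"
    using ip unfolding ipair_def by auto
  have rc: "\<And>x. x \<in> N \<Longrightarrow> \<rho> x \<in> carrier_mat d d" using r unfolding irr_rep_def is_rep_def by auto
  have Tir: "Ti * \<rho> n = P n * Ti" if n: "n \<in> N" for n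
  proof -
    have "Ti * \<rho> n = Ti * (\<rho> n * (T * Ti))" using T rc[OF n] by simp
    also have "\<dots> = Ti * ((\<rho> n * T) * Ti)" using T rc[OF n] by simp
    also have "\<dots> = Ti * ((T * P n) * Ti)" using int n by simp
    also have "\<dots> = Ti * (T * (P n * Ti))" using T PNc[OF n] by simp
    also have "\<dots> = P n * Ti" using assoc_use[OF T(4) T(2) T(1) mult_carrier_mat[OF PNc[OF n] T(2)]] T PNc[OF n] by simp
    finally show ?thesis .
  qed
  define Z where "Z = T * (Y * Ti)"
  have Zc: "Z \<in> carrier_mat d d" unfolding Z_def using T Y by simp
  have "\<forall>n\<in>N. Z * \<rho> n = \<rho> n * Z"
  proof
    fix n assume n: "n \<in> N"
    have "Z * \<rho> n = T * (Y * (Ti * \<rho> n))" unfolding Z_def using T Y rc[OF n] by simp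
    also have "\<dots> = T * (Y * (P n * Ti))" using Tir[OF n] by simp
    also have "\<dots> = T * ((Y * P n) * Ti)" using T Y PNc[OF n] by simp
    also have "\<dots> = T * ((P n * Y) * Ti)" using comm n by simp
    also have "\<dots> = (T * P n) * (Y * Ti)" using T Y PNc[OF n] by simp
    also have "\<dots> = (\<rho> n * T) * (Y * Ti)" using int n by simp
    also have "\<dots> = \<rho> n * Z" unfolding Z_def using T Y rc[OF n] by simp
    finally show "Z * \<rho> n = \<rho> n * Z" .
  qed
  from schur_irr[OF r Zc this] obtain c where c: "Z = c \<cdot>\<^sub>m 1\<^sub>m d" by blast
  have "Y = (Ti * T) * (Y * (Ti * T))" using T Y by simp
  also have "\<dots> = Ti * Z * T" unfolding Z_def using T Y by simp
  also have "\<dots> = c \<cdot>\<^sub>m (Ti * T)" unfolding c using T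
    by (simp add: mult_smult_one[of Ti d d] mult_smult_assoc_mat[of Ti d d T d])
  also have "\<dots> = c \<cdot>\<^sub>m 1\<^sub>m d" using T by simp
  finally show ?thesis by blast
qed

lemma P_ipair: "x \<in> S \<Longrightarrow> \<exists>B. ipair d (P x) B"
  using invertible_ipair[OF Pc Pinvertible] by blast

lemma P_nz: "x \<in> S \<Longrightarrow> P x \<noteq> 0\<^sub>m d d"
proof -
  assume x: "x \<in> S"
  then obtain B where "ipair d (P x) B" using P_ipair by blast
  thus ?thesis using inv_nonzero[OF Pc[OF x] _ _ dpos] unfolding ipair_def by blast
qed


lemma zero_smult_d: "A \<in> carrier_mat d d \<Longrightarrow> (0::complex) \<cdot>\<^sub>m A = 0\<^sub>m d d"
  by (rule eq_matI) auto

lemma mu_exists: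
  assumes x: "x \<in> C" and \<sigma>: "\<sigma> \<in> Gal_ab" and fx: "fixes_char G N \<theta> x \<sigma>"
  shows "\<exists>\<mu>. mu_cond G S N d P (x, \<sigma>) \<mu>"
proof -
  interpret gal: galois \<sigma> using \<sigma> by unfold_locales
  have xc: "x \<in> carrier G" using Cc[OF x] .
  define cj where "cj y = x \<otimes> y \<otimes> inv x" for y
  have cjS: "\<And>y. y \<in> S \<Longrightarrow> cj y \<in> S" unfolding cj_def using stab_conj[OF C Ncar cc x \<sigma> fx] by blast
  have cjN: "\<And>n. n \<in> N \<Longrightarrow> cj n \<in> N" unfolding cj_def using cc[OF x] by blast
  have cjm: "\<And>a b. a \<in> carrier G \<Longrightarrow> b \<in> carrier G \<Longrightarrow> cj (a \<otimes> b) = cj a \<otimes> cj b"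
    unfolding cj_def using xc by (simp add: m_assoc)
  have cj1: "cj \<one> = \<one>" unfolding cj_def using xc by simp
  have NSe: "\<And>n. n \<in> N \<Longrightarrow> n \<in> S" using NS by auto
  define Q where "Q y = map_mat \<sigma> (P (cj y))" for y
  have Qc: "\<And>y. y \<in> S \<Longrightarrow> Q y \<in> carrier_mat d d" unfolding Q_def using Pc cjS by simp
  have QNS: "Q (n \<otimes> y) = Q n * Q y" if n: "n \<in> N" and y: "y \<in> S" for n y
  proof -
    have "Q (n \<otimes> y) = map_mat \<sigma> (P (cj n) * P (cj y))"
      unfolding Q_def using cjm[OF Nc[OF n] Sc[OF y]] Pl[OF cjN[OF n] cjS[OF y]] by simp
    also have "\<dots> = Q n * Q y" unfolding Q_def
      using gal.map_mult[OF Pqmat[OF cjS[OF NSe[OF n]]] Pqmat[OF cjS[OF y]]] Pc[OF cjS[OF NSe[OF n]]] Pc[OF cjS[OF y]]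
      by simp
    finally show ?thesis .
  qed
  have QSN: "Q (y \<otimes> n) = Q y * Q n" if n: "n \<in> N" and y: "y \<in> S" for n y
  proof -
    have "Q (y \<otimes> n) = map_mat \<sigma> (P (cj y) * P (cj n))"
      unfolding Q_def using cjm[OF Sc[OF y] Nc[OF n]] Pr[OF cjN[OF n] cjS[OF y]] by simp
    also have "\<dots> = Q y * Q n" unfolding Q_def
      using gal.map_mult[OF Pqmat[OF cjS[OF y]] Pqmat[OF cjS[OF NSe[OF n]]]] Pc[OF cjS[OF NSe[OF n]]] Pc[OF cjS[OF y]]
      by simp
    finally show ?thesis .
  qed
  have Q1: "Q \<one> = 1\<^sub>m d" unfolding Q_def cj1 P1 gal.map_one ..
  have Qrep: "is_rep G N d Q" unfolding is_rep_def
    using Qc NSe Q1 QNS by simp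
  from rho_ex obtain \<rho> T0 T0i where r: "irr_rep G N d \<rho>" and rtr: "\<forall>x\<in>N. mtrace (\<rho> x) = \<theta> x"
    and ip0: "ipair d T0 T0i" and int0: "\<forall>x\<in>N. T0 * P x = \<rho> x * T0" by blast
  have Qtr: "\<forall>n\<in>N. mtrace (Q n) = mtrace (\<rho> n)"
  proof
    fix n assume n: "n \<in> N"
    have "mtrace (Q n) = \<sigma> (mtrace (P (cj n)))"
      unfolding Q_def using gal.map_trace[OF Pqmat[OF cjS[OF NSe[OF n]]] Pc[OF cjS[OF NSe[OF n]]]] .
    also have "\<dots> = \<sigma> (\<theta> (x \<otimes> n \<otimes> inv x))" using Ptr[OF cjN[OF n]] unfolding cj_def by simp
    also have "\<dots> = \<theta> n" using fx n unfolding fixes_char_iff by simp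
    finally show "mtrace (Q n) = mtrace (\<rho> n)" using rtr n by simp
  qed
  from char_equiv[OF NG finN r Qrep Qtr] obtain T1 T1i where
    T1: "T1 \<in> carrier_mat d d" "T1i \<in> carrier_mat d d" "T1 * T1i = 1\<^sub>m d" "T1i * T1 = 1\<^sub>m d"
    and int1: "\<forall>x\<in>N. T1 * Q x = \<rho> x * T1" by blast
  have T0: "T0 \<in> carrier_mat d d" "T0i \<in> carrier_mat d d" "T0 * T0i = 1\<^sub>m d" "T0i * T0 = 1\<^sub>m d"
    using ip0 unfolding ipair_def by auto
  have rc: "\<And>x. x \<in> N \<Longrightarrow> \<rho> x \<in> carrier_mat d d" using r unfolding irr_rep_def is_rep_def by auto
  define L where "L = T0i * T1"
  define Li where "Li = T1i * T0"
  have Lc: "L \<in> carrier_mat d d" "Li \<in> carrier_mat d d" unfolding L_def Li_def using T0 T1 by auto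
  have LLi: "L * Li = 1\<^sub>m d" unfolding L_def Li_def using T0 T1 by simp
  have LiL: "Li * L = 1\<^sub>m d" unfolding L_def Li_def using T0 T1 by simp
  have QN: "Q n = Li * (P n * L)" if n: "n \<in> N" for n
  proof -
    have a: "T0 * (P n * W) = \<rho> n * (T0 * W)" if W: "W \<in> carrier_mat d d" for W
      using assoc_use[OF _ T0(1) PNc[OF n] W, of "\<rho> n * T0"] int0 n T0 rc[OF n] W by simp
    have b: "T1i * (\<rho> n * T1) = Q n"
    proof -
      have "\<rho> n * T1 = T1 * Q n" using int1 n by simp
      thus ?thesis using T1 Qc[OF NSe[OF n]] by simp
    qed
    have "Li * (P n * L) = T1i * (T0 * (P n * (T0i * T1)))" unfolding Li_def L_def using T0 T1 PNc[OF n] by simp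
    also have "\<dots> = T1i * (\<rho> n * (T0 * (T0i * T1)))" using a T0 T1 by simp
    also have "\<dots> = T1i * (\<rho> n * T1)" using T0 T1 by simp
    also have "\<dots> = Q n" using b .
    finally show ?thesis by simp
  qed
  define R where "R y = L * (Q y * Li)" for y
  have Rc: "\<And>y. y \<in> S \<Longrightarrow> R y \<in> carrier_mat d d" unfolding R_def using Lc Qc by simp
  have RN: "R n = P n" if n: "n \<in> N" for n
    unfolding R_def QN[OF n] using Lc LLi LiL PNc[OF n] by simp
  have RNS: "R (n \<otimes> y) = P n * R y" if n: "n \<in> N" and y: "y \<in> S" for n y
    unfolding R_def QNS[OF n y] QN[OF n] using Lc LLi LiL PNc[OF n] Qc[OF y] by simp
  have RSN: "R (y \<otimes> n) = R y * P n" if n: "n \<in> N" and y: "y \<in> S" for n y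
    unfolding R_def QSN[OF n y] QN[OF n] using Lc LLi LiL PNc[OF n] Qc[OF y] by simp
  have Rscal: "\<exists>c. R y = c \<cdot>\<^sub>m P y" if y: "y \<in> S" for y
  proof -
    obtain B where "ipair d (P y) B" using P_ipair[OF y] by blast
    hence B: "B \<in> carrier_mat d d" "P y * B = 1\<^sub>m d" "B * P y = 1\<^sub>m d" unfolding ipair_def by auto
    define Z where "Z = R y * B"
    have Zc: "Z \<in> carrier_mat d d" unfolding Z_def using Rc[OF y] B by simp
    have "\<forall>m\<in>N. Z * P m = P m * Z"
    proof
      fix m assume m: "m \<in> N"
      have yC: "inv y \<in> C" using SC[OF S_inv[OF y]] .
      define n where "n = inv y \<otimes> m \<otimes> inv (inv y)"
      have n: "n \<in> N" unfolding n_def using cc[OF yC m] .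
      have ymn: "y \<otimes> n = m \<otimes> y" unfolding n_def using Sc[OF y] Nc[OF m] by (simp add: m_assoc)
      have PP: "P y * P n = P m * P y" using Pr[OF n y] Pl[OF m y] ymn by simp
      have BP: "B * P m = P n * B"
      proof -
        have "B * P m = B * (P m * (P y * B))" using B PNc[OF m] by simp
        also have "\<dots> = B * ((P m * P y) * B)" using B PNc[OF m] Pc[OF y] by simp
        also have "\<dots> = B * ((P y * P n) * B)" using PP by simp
        also have "\<dots> = B * (P y * (P n * B))" using B PNc[OF n] Pc[OF y] by simp
        also have "\<dots> = P n * B" using B PNc[OF n] Pc[OF y] by simp
        finally show ?thesis .
      qed
      have "Z * P m = R y * (B * P m)" unfolding Z_def using Rc[OF y] B PNc[OF m] by simp
      also have "\<dots> = R y * (P n * B)" using BP by simp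
      also have "\<dots> = (R y * P n) * B" using Rc[OF y] B PNc[OF n] by simp
      also have "\<dots> = R (m \<otimes> y) * B" using RSN[OF n y] ymn by simp
      also have "\<dots> = (P m * R y) * B" using RNS[OF m y] by simp
      also have "\<dots> = P m * Z" unfolding Z_def using Rc[OF y] B PNc[OF m] by simp
      finally show "Z * P m = P m * Z" .
    qed
    from schurP[OF Zc this] obtain c where c: "Z = c \<cdot>\<^sub>m 1\<^sub>m d" by blast
    have "R y = R y * (B * P y)" using Rc[OF y] B by simp
    also have "\<dots> = Z * P y" unfolding Z_def using Rc[OF y] B Pc[OF y] by simp
    also have "\<dots> = c \<cdot>\<^sub>m P y" unfolding c using smult_one_mult[OF Pc[OF y]] .
    finally show ?thesis by blast
  qed
  define \<mu>0 where "\<mu>0 y = (SOME c. R y = c \<cdot>\<^sub>m P y)" for y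
  have \<mu>0: "R y = \<mu>0 y \<cdot>\<^sub>m P y" if y: "y \<in> S" for y
    unfolding \<mu>0_def using someI_ex[OF Rscal[OF y]] .
  have Qform: "Q y = \<mu>0 y \<cdot>\<^sub>m (Li * (P y * L))" if y: "y \<in> S" for y
  proof -
    have "Q y = Li * (R y * L)" unfolding R_def using Lc LLi LiL Qc[OF y] by simp
    also have "\<dots> = Li * ((\<mu>0 y \<cdot>\<^sub>m P y) * L)" using \<mu>0[OF y] by simp
    also have "\<dots> = \<mu>0 y \<cdot>\<^sub>m (Li * (P y * L))"
      using Lc Pc[OF y] by (simp add: mult_smult_assoc_mat[of _ d d _ d] mult_smult_distrib[of _ d d _ d])
    finally show ?thesis .
  qed
  have \<mu>0nz: "\<mu>0 y \<noteq> 0" if y: "y \<in> S" for y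
  proof
    assume z: "\<mu>0 y = 0"
    have iy: "inv y \<in> S" using S_inv[OF y] .
    have e1: "cj y \<otimes> cj (inv y) = \<one>" using cjm[OF Sc[OF y] Sc[OF iy]] Sc[OF y] cj1 by simp
    have "P (cj y) * P (cj (inv y)) = \<alpha> (cj y) (cj (inv y)) \<cdot>\<^sub>m 1\<^sub>m d"
      using Pmult[OF cjS[OF y] cjS[OF iy]] e1 P1 by simp
    hence "Q y * Q (inv y) = \<sigma> (\<alpha> (cj y) (cj (inv y))) \<cdot>\<^sub>m 1\<^sub>m d"
      unfolding Q_def
      using gal.map_mult[OF Pqmat[OF cjS[OF y]] Pqmat[OF cjS[OF iy]]] Pc[OF cjS[OF y]] Pc[OF cjS[OF iy]]
        gal.map_smult[OF alpha_Qab[OF cjS[OF y] cjS[OF iy]] qmat_one] gal.map_one by simp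
    moreover have "Q y = 0\<^sub>m d d" using Qform[OF y] z zero_smult_d[of "Li * (P y * L)"] Lc Pc[OF y] by simp
    ultimately have "\<sigma> (\<alpha> (cj y) (cj (inv y))) \<cdot>\<^sub>m 1\<^sub>m d = (0\<^sub>m d d :: complex mat)" using Qc[OF iy] by simp
    hence "(\<sigma> (\<alpha> (cj y) (cj (inv y))) \<cdot>\<^sub>m 1\<^sub>m d) $$ (0, 0) = (0\<^sub>m d d :: complex mat) $$ (0, 0)" by simp
    hence "\<sigma> (\<alpha> (cj y) (cj (inv y))) = 0" using dpos by simp
    thus False using gal.nz[OF alpha_nz[OF cjS[OF y] cjS[OF iy]]] by simp
  qed
  have \<mu>01: "\<mu>0 \<one> = 1"
  proof -
    have "1\<^sub>m d = \<mu>0 \<one> \<cdot>\<^sub>m (Li * (P \<one> * L))" using Qform[OF S_one] Q1 by simp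
    also have "Li * (P \<one> * L) = 1\<^sub>m d" using P1 Lc LiL by simp
    finally show ?thesis using smult_one_eq[OF _ dpos] by metis
  qed
  have \<mu>0N: "\<mu>0 (n \<otimes> y) = \<mu>0 y" if n: "n \<in> N" and y: "y \<in> S" for n y
  proof -
    have ny: "n \<otimes> y \<in> S" using S_mult[OF NSe[OF n] y] .
    have "\<mu>0 (n \<otimes> y) \<cdot>\<^sub>m P (n \<otimes> y) = R (n \<otimes> y)" using \<mu>0[OF ny] by simp
    also have "\<dots> = P n * (\<mu>0 y \<cdot>\<^sub>m P y)" using RNS[OF n y] \<mu>0[OF y] by simp
    also have "\<dots> = \<mu>0 y \<cdot>\<^sub>m P (n \<otimes> y)" using Pl[OF n y] PNc[OF n] Pc[OF y]
      by (simp add: mult_smult_distrib[of _ d d _ d])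
    finally show ?thesis using smultm_cancel[OF Pc[OF ny] P_nz[OF ny]] by blast
  qed
  define \<mu> where "\<mu> = restrict \<mu>0 S"
  show ?thesis unfolding mu_cond_def
  proof (intro exI[of _ \<mu>] conjI ballI)
    show "\<mu> \<in> extensional S" unfolding \<mu>_def by simp
    show "\<mu> \<one> = 1" unfolding \<mu>_def using S_one \<mu>01 by simp
  next
    fix y assume y: "y \<in> S"
    show "\<mu> y \<noteq> 0" unfolding \<mu>_def using y \<mu>0nz by simp
    fix n assume n: "n \<in> N"
    show "\<mu> (n \<otimes> y) = \<mu> y" unfolding \<mu>_def using y S_mult[OF NSe[OF n] y] \<mu>0N[OF n y] by simp
  next
    show "\<exists>L Li. L \<in> carrier_mat d d \<and> Li \<in> carrier_mat d d \<and> L * Li = 1\<^sub>m d \<and> Li * L = 1\<^sub>m d \<and>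
          (\<forall>y\<in>S. map_mat (snd (x, \<sigma>)) (P (fst (x, \<sigma>) \<otimes> y \<otimes> inv (fst (x, \<sigma>)))) = \<mu> y \<cdot>\<^sub>m (Li * P y * L))"
    proof -
      have eq: "map_mat \<sigma> (P (x \<otimes> y \<otimes> inv x)) = \<mu> y \<cdot>\<^sub>m (Li * P y * L)" if y: "y \<in> S" for y
      proof -
        have "map_mat \<sigma> (P (x \<otimes> y \<otimes> inv x)) = Q y" unfolding Q_def cj_def ..
        also have "\<dots> = \<mu> y \<cdot>\<^sub>m (Li * (P y * L))" using Qform[OF y] y unfolding \<mu>_def by simp
        also have "Li * (P y * L) = Li * P y * L" using Lc Pc[OF y] by simp
        finally show ?thesis .
      qed
      show ?thesis using Lc LLi LiL eq by (intro exI[of _ L] exI[of _ Li]) simp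
    qed
  qed
qed


lemma mu_weak_unique:
  assumes c1: "mu_cond G S N d P a \<mu>1"
    and L2: "ipair d L2 L2i"
    and e2: "\<forall>y\<in>S. map_mat (snd a) (P (fst a \<otimes> y \<otimes> inv (fst a))) = \<nu> y \<cdot>\<^sub>m (L2i * P y * L2)"
    and n2: "\<forall>n\<in>N. \<nu> n = 1"
  shows "\<forall>y\<in>S. \<mu>1 y = \<nu> y"
proof -
  define M where "M y = map_mat (snd a) (P (fst a \<otimes> y \<otimes> inv (fst a)))" for y
  from c1 obtain L1 L1i where L1: "L1 \<in> carrier_mat d d" "L1i \<in> carrier_mat d d" "L1 * L1i = 1\<^sub>m d" "L1i * L1 = 1\<^sub>m d"
    and e1: "\<forall>y\<in>S. M y = \<mu>1 y \<cdot>\<^sub>m (L1i * P y * L1)"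
    unfolding mu_cond_def M_def by blast
  have m11: "\<mu>1 \<one> = 1" and m1N: "\<forall>y\<in>S. \<forall>n\<in>N. \<mu>1 (n \<otimes> y) = \<mu>1 y"
    using c1 unfolding mu_cond_def by auto
  have L2c: "L2 \<in> carrier_mat d d" "L2i \<in> carrier_mat d d" "L2 * L2i = 1\<^sub>m d" "L2i * L2 = 1\<^sub>m d"
    using L2 unfolding ipair_def by auto
  have NSe: "\<And>n. n \<in> N \<Longrightarrow> n \<in> S" using NS by auto
  have m1n: "\<mu>1 n = 1" if n: "n \<in> N" for n
    using m1N S_one n m11 Nc[OF n] by (metis r_one)
  have E: "L1i * (P n * L1) = L2i * (P n * L2)" if n: "n \<in> N" for n
  proof -
    have "L1i * P n * L1 = M n" using e1 NSe[OF n] m1n[OF n] by simp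
    also have "\<dots> = L2i * P n * L2" using e2 NSe[OF n] n2 n unfolding M_def by simp
    finally show ?thesis using L1 L2c PNc[OF n] by simp
  qed
  have E': "L1i * (P n * (L1 * W)) = L2i * (P n * (L2 * W))" if n: "n \<in> N" and W: "W \<in> carrier_mat d d" for n W
  proof -
    have "(L1i * (P n * L1)) * W = (L2i * (P n * L2)) * W" by (simp only: E[OF n])
    thus ?thesis using L1 L2c PNc[OF n] W by simp
  qed
  define Y where "Y = L2 * L1i"
  have Yc: "Y \<in> carrier_mat d d" unfolding Y_def using L1 L2c by simp
  have "\<forall>n\<in>N. Y * P n = P n * Y"
  proof
    fix n assume n: "n \<in> N"
    have "Y * P n = L2 * (L1i * (P n * (L1 * L1i)))" unfolding Y_def using L1 L2c PNc[OF n] by simp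
    also have "\<dots> = L2 * (L2i * (P n * (L2 * L1i)))" using E'[OF n, of L1i] L1 by simp
    also have "\<dots> = P n * Y" unfolding Y_def using L1 L2c PNc[OF n] by simp
    finally show "Y * P n = P n * Y" .
  qed
  from schurP[OF Yc this] obtain c where c: "Y = c \<cdot>\<^sub>m 1\<^sub>m d" by blast
  have L2e: "L2 = c \<cdot>\<^sub>m L1"
  proof -
    have "L2 = L2 * (L1i * L1)" using L1 L2c by simp
    also have "\<dots> = Y * L1" unfolding Y_def using L1 L2c by simp
    also have "\<dots> = c \<cdot>\<^sub>m L1" unfolding c using smult_one_mult[OF L1(1)] .
    finally show ?thesis .
  qed
  have L1ie: "L1i = c \<cdot>\<^sub>m L2i"
  proof -
    have "L1i = L1i * (L2 * L2i)" using L1 L2c by simp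
    also have "\<dots> = L1i * ((c \<cdot>\<^sub>m L1) * L2i)" using L2e by simp
    also have "\<dots> = c \<cdot>\<^sub>m L2i" using L1 L2c
      by (simp add: mult_smult_assoc_mat[of _ d d _ d] mult_smult_distrib[of _ d d _ d])
    finally show ?thesis .
  qed
  show ?thesis
  proof
    fix y assume y: "y \<in> S"
    have W12: "L2i * P y * L2 = L1i * P y * L1"
      using L2e L1ie L1 L2c Pc[OF y]
      by (simp add: mult_smult_assoc_mat[of _ d d _ d] mult_smult_distrib[of _ d d _ d])
    obtain B where "ipair d (P y) B" using P_ipair[OF y] by blast
    hence B: "B \<in> carrier_mat d d" "P y * B = 1\<^sub>m d" unfolding ipair_def by auto
    have W1c: "L1i * P y * L1 \<in> carrier_mat d d" using L1 Pc[OF y] by simp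
    have "(L1i * P y * L1) * (L1i * B * L1) = 1\<^sub>m d" using L1 Pc[OF y] B by simp
    moreover have "L1i * B * L1 \<in> carrier_mat d d" using L1 B by simp
    ultimately have nz: "L1i * P y * L1 \<noteq> 0\<^sub>m d d" using inv_nonzero[OF W1c _ _ dpos] by blast
    have "\<mu>1 y \<cdot>\<^sub>m (L1i * P y * L1) = M y" using e1 y by simp
    also have "\<dots> = \<nu> y \<cdot>\<^sub>m (L1i * P y * L1)" using e2 y W12 unfolding M_def by simp
    finally show "\<mu>1 y = \<nu> y" using smultm_cancel[OF W1c nz] by blast
  qed
qed

lemma mu_unique:
  assumes c1: "mu_cond G S N d P a \<mu>1" and c2: "mu_cond G S N d P a \<mu>2"
  shows "\<mu>1 = \<mu>2"
proof -
  from c2 obtain L2 L2i where L2: "ipair d L2 L2i"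
    and e2: "\<forall>y\<in>S. map_mat (snd a) (P (fst a \<otimes> y \<otimes> inv (fst a))) = \<mu>2 y \<cdot>\<^sub>m (L2i * P y * L2)"
    unfolding mu_cond_def ipair_def by blast
  have m21: "\<mu>2 \<one> = 1" and m2N: "\<forall>y\<in>S. \<forall>n\<in>N. \<mu>2 (n \<otimes> y) = \<mu>2 y"
    using c2 unfolding mu_cond_def by auto
  have "\<forall>n\<in>N. \<mu>2 n = 1"
  proof
    fix n assume n: "n \<in> N"
    show "\<mu>2 n = 1" using m2N S_one n m21 Nc[OF n] by (metis r_one)
  qed
  from mu_weak_unique[OF c1 L2 e2 this] have eq: "\<forall>y\<in>S. \<mu>1 y = \<mu>2 y" .
  have x1: "\<mu>1 \<in> extensional S" and x2: "\<mu>2 \<in> extensional S" using c1 c2 unfolding mu_cond_def by auto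
  show ?thesis using extensionalityI[OF x1 x2] eq by blast
qed

lemma mu_eq:
  assumes "mu_cond G S N d P a \<mu>"
  shows "mu G S N d P a = \<mu>"
  unfolding mu_def using assms mu_unique by (intro the_equality) auto


lemma mu_N1:
  assumes "mu_cond G S N d P a \<mu>" "n \<in> N"
  shows "\<mu> n = 1"
proof -
  have m1: "\<mu> \<one> = 1" and mN: "\<forall>y\<in>S. \<forall>n\<in>N. \<mu> (n \<otimes> y) = \<mu> y"
    using assms(1) unfolding mu_cond_def by auto
  show ?thesis using mN S_one assms(2) m1 Nc[OF assms(2)] by (metis r_one)
qed

lemma alpha_N:
  assumes k: "k \<in> S" and z: "z \<in> N"
  shows "\<alpha> k z = 1" "\<alpha> (k \<otimes> z) (inv k) = \<alpha> k (inv k)"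
proof -
  have zS: "z \<in> S" using z NS by auto
  have kz: "k \<otimes> z \<in> S" using S_mult[OF k zS] .
  have "1 \<cdot>\<^sub>m P (k \<otimes> z) = \<alpha> k z \<cdot>\<^sub>m P (k \<otimes> z)" using Pmult[OF k zS] Pr[OF z k] by simp
  thus "\<alpha> k z = 1" using smultm_cancel[OF Pc[OF kz] P_nz[OF kz]] by metis
  define w where "w = k \<otimes> z \<otimes> inv k"
  have w: "w \<in> N" unfolding w_def using cc[OF SC[OF k] z] .
  have wS: "w \<in> S" using w NS by auto
  have ik: "inv k \<in> S" using S_inv[OF k] .
  have kzw: "k \<otimes> z = w \<otimes> k" unfolding w_def using Sc[OF k] Nc[OF z] by (simp add: m_assoc)
  have "\<alpha> (k \<otimes> z) (inv k) \<cdot>\<^sub>m P w = P (k \<otimes> z) * P (inv k)"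
    using Pmult[OF kz ik] unfolding w_def by simp
  also have "\<dots> = P w * (P k * P (inv k))" using kzw Pl[OF w k] Pc[OF k] Pc[OF ik] PNc[OF w] by simp
  also have "\<dots> = P w * (\<alpha> k (inv k) \<cdot>\<^sub>m 1\<^sub>m d)" using Pmult[OF k ik] Sc[OF k] P1 by simp
  also have "\<dots> = \<alpha> k (inv k) \<cdot>\<^sub>m P w" using mult_smult_one[OF PNc[OF w]] .
  finally show "\<alpha> (k \<otimes> z) (inv k) = \<alpha> k (inv k)" using smultm_cancel[OF Pc[OF wS] P_nz[OF wS]] by blast
qed

lemma mu_coset:
  assumes x: "x \<in> C" and \<sigma>: "\<sigma> \<in> Gal_ab" and fx: "fixes_char G N \<theta> x \<sigma>" and k: "k \<in> S"
  shows "\<forall>y\<in>S. mu G S N d P (k \<otimes> x, \<sigma>) y = mu G S N d P (x, \<sigma>) y *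
           (\<sigma> (\<alpha> k (inv k)) * \<sigma> (inverse (\<alpha> k (x \<otimes> y \<otimes> inv x) * \<alpha> (k \<otimes> (x \<otimes> y \<otimes> inv x)) (inv k))))"
proof -
  interpret gal: galois \<sigma> using \<sigma> by unfold_locales
  have xc: "x \<in> carrier G" using Cc[OF x] .
  have kc: "k \<in> carrier G" using Sc[OF k] .
  have ik: "inv k \<in> S" using S_inv[OF k] .
  define cj where "cj y = x \<otimes> y \<otimes> inv x" for y
  have cjS: "\<And>y. y \<in> S \<Longrightarrow> cj y \<in> S" unfolding cj_def using stab_conj[OF C Ncar cc x \<sigma> fx] by blast
  have cjN: "\<And>n. n \<in> N \<Longrightarrow> cj n \<in> N" unfolding cj_def using cc[OF x] by blast
  have NSe: "\<And>n. n \<in> N \<Longrightarrow> n \<in> S" using NS by auto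
  define f where "f y = \<sigma> (\<alpha> k (inv k)) * \<sigma> (inverse (\<alpha> k (cj y) * \<alpha> (k \<otimes> cj y) (inv k)))" for y
  from mu_exists[OF x \<sigma> fx] obtain \<mu>t where ct: "mu_cond G S N d P (x, \<sigma>) \<mu>t" by blast
  have kx: "k \<otimes> x \<in> C" using subgroup.m_closed[OF C SC[OF k] x] .
  have fkx: "fixes_char G N \<theta> (k \<otimes> x) \<sigma>" using fixes_char_mult[OF C Ncar cc x fx k] .
  from mu_exists[OF kx \<sigma> fkx] obtain \<mu>a where ca: "mu_cond G S N d P (k \<otimes> x, \<sigma>) \<mu>a" by blast
  from ct obtain Lt Lti where Lt: "Lt \<in> carrier_mat d d" "Lti \<in> carrier_mat d d" "Lt * Lti = 1\<^sub>m d" "Lti * Lt = 1\<^sub>m d"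
    and et: "\<forall>y\<in>S. map_mat \<sigma> (P (x \<otimes> y \<otimes> inv x)) = \<mu>t y \<cdot>\<^sub>m (Lti * P y * Lt)"
    unfolding mu_cond_def by auto
  define K1 where "K1 = map_mat \<sigma> (P k)"
  define K2 where "K2 = map_mat \<sigma> (P (inv k))"
  define s where "s = \<sigma> (\<alpha> k (inv k))"
  have K: "K1 \<in> carrier_mat d d" "K2 \<in> carrier_mat d d" unfolding K1_def K2_def using Pc[OF k] Pc[OF ik] by auto
  have snz: "s \<noteq> 0" unfolding s_def using gal.nz[OF alpha_nz[OF k ik]] .
  have K12: "K1 * K2 = s \<cdot>\<^sub>m 1\<^sub>m d"
  proof -
    have "P k * P (inv k) = \<alpha> k (inv k) \<cdot>\<^sub>m 1\<^sub>m d" using Pmult[OF k ik] kc P1 by simp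
    thus ?thesis unfolding K1_def K2_def s_def
      using gal.map_mult[OF Pqmat[OF k] Pqmat[OF ik]] Pc[OF k] Pc[OF ik]
        gal.map_smult[OF alpha_Qab[OF k ik] qmat_one] gal.map_one by simp
  qed
  define L2 where "L2 = Lt * K2"
  define L2i where "L2i = inverse s \<cdot>\<^sub>m (K1 * Lti)"
  have L2c: "L2 \<in> carrier_mat d d" "L2i \<in> carrier_mat d d" unfolding L2_def L2i_def using Lt K by auto
  have L2iL2: "L2i * L2 = 1\<^sub>m d"
  proof -
    have "L2i * L2 = inverse s \<cdot>\<^sub>m (K1 * (Lti * (Lt * K2)))" unfolding L2_def L2i_def using Lt K
      by (simp add: mult_smult_assoc_mat[of _ d d _ d])
    also have "\<dots> = inverse s \<cdot>\<^sub>m (s \<cdot>\<^sub>m 1\<^sub>m d)" using Lt K K12 by simp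
    also have "\<dots> = 1\<^sub>m d" using snz by simp
    finally show ?thesis .
  qed
  have L2L2i: "L2 * L2i = 1\<^sub>m d" using mat_mult_left_right_inverse[OF L2c(2) L2c(1) L2iL2] .
  have ip: "ipair d L2 L2i" unfolding ipair_def using L2c L2iL2 L2L2i by simp
  define \<nu> where "\<nu> y = \<mu>t y * f y" for y
  have e2: "\<forall>y\<in>S. map_mat (snd (k \<otimes> x, \<sigma>)) (P (fst (k \<otimes> x, \<sigma>) \<otimes> y \<otimes> inv (fst (k \<otimes> x, \<sigma>)))) = \<nu> y \<cdot>\<^sub>m (L2i * P y * L2)"
  proof
    fix y assume y: "y \<in> S"
    define z where "z = cj y"
    have z: "z \<in> S" unfolding z_def using cjS[OF y] .
    have kz: "k \<otimes> z \<in> S" using S_mult[OF k z] .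
    define \<gamma> where "\<gamma> = \<alpha> k z * \<alpha> (k \<otimes> z) (inv k)"
    have \<gamma>nz: "\<gamma> \<noteq> 0" unfolding \<gamma>_def using alpha_nz[OF k z] alpha_nz[OF kz ik] by simp
    have \<gamma>Q: "\<gamma> \<in> Qab" unfolding \<gamma>_def using alpha_Qab[OF k z] alpha_Qab[OF kz ik] by simp
    have conj: "k \<otimes> x \<otimes> y \<otimes> inv (k \<otimes> x) = k \<otimes> z \<otimes> inv k"
      unfolding z_def cj_def using xc kc Sc[OF y] by (simp add: m_assoc inv_mult_group)
    have "P k * (P z * P (inv k)) = \<gamma> \<cdot>\<^sub>m P (k \<otimes> z \<otimes> inv k)"
    proof -
      have "P k * (P z * P (inv k)) = (P k * P z) * P (inv k)" using Pc[OF k] Pc[OF z] Pc[OF ik] by simp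
      also have "\<dots> = (\<alpha> k z \<cdot>\<^sub>m P (k \<otimes> z)) * P (inv k)" using Pmult[OF k z] by simp
      also have "\<dots> = \<alpha> k z \<cdot>\<^sub>m (P (k \<otimes> z) * P (inv k))" using Pc[OF kz] Pc[OF ik]
        by (simp add: mult_smult_assoc_mat[of _ d d _ d])
      also have "\<dots> = \<gamma> \<cdot>\<^sub>m P (k \<otimes> z \<otimes> inv k)" using Pmult[OF kz ik] unfolding \<gamma>_def by simp
      finally show ?thesis .
    qed
    hence Pkzk: "P (k \<otimes> z \<otimes> inv k) = inverse \<gamma> \<cdot>\<^sub>m (P k * (P z * P (inv k)))" using \<gamma>nz by simp
    have qprod: "qmat (P k * (P z * P (inv k)))"
      using qmat_mult[OF Pqmat[OF k] qmat_mult[OF Pqmat[OF z] Pqmat[OF ik]]] Pc[OF k] Pc[OF z] Pc[OF ik] by simp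
    have "map_mat \<sigma> (P (k \<otimes> z \<otimes> inv k)) = \<sigma> (inverse \<gamma>) \<cdot>\<^sub>m map_mat \<sigma> (P k * (P z * P (inv k)))"
      unfolding Pkzk using gal.map_smult[OF Qab_inverse[OF \<gamma>Q] qprod] .
    also have "map_mat \<sigma> (P k * (P z * P (inv k))) = K1 * (map_mat \<sigma> (P z) * K2)"
      unfolding K1_def K2_def
      using gal.map_mult[OF Pqmat[OF k] qmat_mult[OF Pqmat[OF z] Pqmat[OF ik]]]
        gal.map_mult[OF Pqmat[OF z] Pqmat[OF ik]] Pc[OF k] Pc[OF z] Pc[OF ik] by simp
    also have "map_mat \<sigma> (P z) = \<mu>t y \<cdot>\<^sub>m (Lti * P y * Lt)" using et y unfolding z_def cj_def by simp
    finally have A: "map_mat \<sigma> (P (k \<otimes> z \<otimes> inv k)) = \<sigma> (inverse \<gamma>) \<cdot>\<^sub>m (K1 * ((\<mu>t y \<cdot>\<^sub>m (Lti * P y * Lt)) * K2))" .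
    have B: "K1 * ((\<mu>t y \<cdot>\<^sub>m (Lti * P y * Lt)) * K2) = (\<mu>t y * s) \<cdot>\<^sub>m (L2i * P y * L2)"
    proof -
      have ss: "\<mu>t y * s * inverse s = \<mu>t y" using snz by (simp add: mult.assoc)
      have "K1 * ((\<mu>t y \<cdot>\<^sub>m (Lti * P y * Lt)) * K2) = \<mu>t y \<cdot>\<^sub>m (K1 * (Lti * (P y * (Lt * K2))))"
        using K Lt Pc[OF y] by (simp add: mult_smult_assoc_mat[of _ d d _ d] mult_smult_distrib[of _ d d _ d])
      also have "\<dots> = (\<mu>t y * s * inverse s) \<cdot>\<^sub>m (K1 * (Lti * (P y * (Lt * K2))))"
        by (simp only: ss)
      also have "\<dots> = (\<mu>t y * s) \<cdot>\<^sub>m (inverse s \<cdot>\<^sub>m (K1 * (Lti * (P y * (Lt * K2)))))"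
        by simp
      also have "inverse s \<cdot>\<^sub>m (K1 * (Lti * (P y * (Lt * K2)))) = L2i * P y * L2"
        unfolding L2_def L2i_def using K Lt Pc[OF y]
        by (simp add: mult_smult_assoc_mat[of _ d d _ d] mult_smult_distrib[of _ d d _ d])
      finally show ?thesis .
    qed
    have "f y = s * \<sigma> (inverse \<gamma>)" unfolding f_def s_def \<gamma>_def z_def ..
    hence "\<sigma> (inverse \<gamma>) * (\<mu>t y * s) = \<nu> y" unfolding \<nu>_def by (simp add: ac_simps)
    with A B conj show "map_mat (snd (k \<otimes> x, \<sigma>)) (P (fst (k \<otimes> x, \<sigma>) \<otimes> y \<otimes> inv (fst (k \<otimes> x, \<sigma>)))) = \<nu> y \<cdot>\<^sub>m (L2i * P y * L2)"
      by simp
  qed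
  have n2: "\<forall>n\<in>N. \<nu> n = 1"
  proof
    fix n assume n: "n \<in> N"
    have "\<mu>t n = 1" using mu_N1[OF ct n] .
    moreover have "\<alpha> k (cj n) = 1" "\<alpha> (k \<otimes> cj n) (inv k) = \<alpha> k (inv k)" using alpha_N[OF k cjN[OF n]] by auto
    moreover have "\<sigma> (inverse (\<alpha> k (inv k))) = inverse (\<sigma> (\<alpha> k (inv k)))" using gal.inverse[OF alpha_Qab[OF k ik]] .
    ultimately show "\<nu> n = 1" unfolding \<nu>_def f_def using gal.nz[OF alpha_nz[OF k ik]] by simp
  qed
  from mu_weak_unique[OF ca ip e2 n2] have "\<forall>y\<in>S. \<mu>a y = \<nu> y" .
  moreover have "mu G S N d P (k \<otimes> x, \<sigma>) = \<mu>a" using mu_eq[OF ca] .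
  moreover have "mu G S N d P (x, \<sigma>) = \<mu>t" using mu_eq[OF ct] .
  ultimately show ?thesis unfolding \<nu>_def f_def cj_def by simp
qed

end


context group begin

lemma transversal_exists:
  assumes K: "subgroup K G" and Ac: "\<And>a. a \<in> A \<Longrightarrow> fst a \<in> carrier G"
    and Acl: "\<And>a h. a \<in> A \<Longrightarrow> h \<in> K \<Longrightarrow> (h \<otimes> fst a, snd a) \<in> A"
  shows "\<exists>T. coset_transversal G K A T"
proof -
  have Kc: "\<And>h. h \<in> K \<Longrightarrow> h \<in> carrier G" using subgroup.subset[OF K] by auto
  define cls where "cls b = {e \<in> A. \<exists>h\<in>K. e = (h \<otimes> fst b, snd b)}" for b
  define r where "r U = (SOME t. t \<in> U)" for U :: "('a \<times> (complex \<Rightarrow> complex)) set"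
  define T where "T = (\<lambda>a. r (cls a)) ` A"
  have self: "b \<in> cls b" if b: "b \<in> A" for b
  proof -
    have "b = (\<one> \<otimes> fst b, snd b)" using Ac[OF b] by simp
    thus ?thesis unfolding cls_def using b subgroup.one_closed[OF K] by blast
  qed
  have rin: "r (cls b) \<in> cls b" if b: "b \<in> A" for b
    unfolding r_def using self[OF b] by (rule someI)
  have clsA: "cls b \<subseteq> A" for b unfolding cls_def by auto
  have cls_eq: "cls c = cls b" if b: "b \<in> A" and c: "c \<in> cls b" for b c
  proof -
    from c obtain h where h: "h \<in> K" and ce: "c = (h \<otimes> fst b, snd b)" unfolding cls_def by auto
    have fb: "fst b \<in> carrier G" using Ac[OF b] .
    show ?thesis
    proof
      show "cls c \<subseteq> cls b"
      proof
        fix e assume "e \<in> cls c"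
        then obtain h2 where e: "e \<in> A" "h2 \<in> K" "e = (h2 \<otimes> fst c, snd c)" unfolding cls_def by auto
        have "e = ((h2 \<otimes> h) \<otimes> fst b, snd b)" using e(3) ce Kc[OF h] Kc[OF e(2)] fb by (simp add: m_assoc)
        moreover have "h2 \<otimes> h \<in> K" using subgroup.m_closed[OF K e(2) h] .
        ultimately show "e \<in> cls b" unfolding cls_def using e(1) by blast
      qed
      show "cls b \<subseteq> cls c"
      proof
        fix e assume "e \<in> cls b"
        then obtain h2 where e: "e \<in> A" "h2 \<in> K" "e = (h2 \<otimes> fst b, snd b)" unfolding cls_def by auto
        have "e = ((h2 \<otimes> inv h) \<otimes> fst c, snd c)" using e(3) ce Kc[OF h] Kc[OF e(2)] fb by (simp add: m_assoc)
        moreover have "h2 \<otimes> inv h \<in> K" using subgroup.m_closed[OF K e(2) subgroup.m_inv_closed[OF K h]] .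
        ultimately show "e \<in> cls c" unfolding cls_def using e(1) by blast
      qed
    qed
  qed
  have "coset_transversal G K A T" unfolding coset_transversal_def
  proof (intro conjI ballI)
    show "T \<subseteq> A" unfolding T_def using rin clsA by blast
    fix a assume a: "a \<in> A"
    define t where "t = r (cls a)"
    have t: "t \<in> cls a" unfolding t_def using rin[OF a] .
    then obtain h where h: "h \<in> K" and te: "t = (h \<otimes> fst a, snd a)" unfolding cls_def by auto
    have tT: "t \<in> T" unfolding T_def t_def using a by blast
    have ex: "\<exists>h\<in>K. a = (h \<otimes> fst t, snd t)"
    proof
      show "inv h \<in> K" using subgroup.m_inv_closed[OF K h] .
      show "a = (inv h \<otimes> fst t, snd t)" using te Kc[OF h] Ac[OF a] by (simp add: m_assoc[symmetric])
    qed
    show "\<exists>!t. t \<in> T \<and> (\<exists>h\<in>K. a = (h \<otimes> fst t, snd t))"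
    proof (rule ex1I[of _ t])
      show "t \<in> T \<and> (\<exists>h\<in>K. a = (h \<otimes> fst t, snd t))" using tT ex by blast
    next
      fix t' assume t': "t' \<in> T \<and> (\<exists>h\<in>K. a = (h \<otimes> fst t', snd t'))"
      then obtain b where b: "b \<in> A" and tb: "t' = r (cls b)" unfolding T_def by blast
      have t'A: "t' \<in> A" using rin[OF b] clsA tb by blast
      have "a \<in> cls t'" unfolding cls_def using a t' by blast
      hence "cls a = cls t'" using cls_eq[OF t'A] by blast
      moreover have "cls t' = cls b" using cls_eq[OF b] rin[OF b] tb by simp
      ultimately show "t' = t" unfolding t_def using tb by simp
    qed
  qed
  thus ?thesis by blast
qed

end

theorem lemma1p8:
  fixes p :: nat and G :: "'g monoid" and N H M :: "'g set"
    and \<theta> \<phi> :: "'g \<Rightarrow> complex"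
    and d d' :: nat and P P' :: "'g \<Rightarrow> complex mat" and \<alpha> \<alpha>' :: "'g \<Rightarrow> 'g \<Rightarrow> complex"
  assumes "Factorial_Ring.prime p" and "group G" and "finite (carrier G)"
    and "H_triple p G (carrier G) N \<theta>"
    and "H_triple p G H M \<phi>"
    and "carrier G = N <#>\<^bsub>G\<^esub> H" and "N \<inter> H = M" and "centralizer_in G N \<subseteq> H"
    and "stab_pair p G H N \<theta> = stab_pair p G H M \<phi>"
    and "proj_rep G (stab G (carrier G) N \<theta>) d P \<alpha>"
    and "assoc_proj G (stab G (carrier G) N \<theta>) N \<theta> d P"
    and "\<forall>x\<in>stab G (carrier G) N \<theta>. \<forall>i<d. \<forall>j<d. P x $$ (i, j) \<in> Qab"
    and "\<forall>x\<in>stab G (carrier G) N \<theta>. \<forall>y\<in>stab G (carrier G) N \<theta>. root_of_unity (\<alpha> x y)"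
    and "proj_rep G (stab G H M \<phi>) d' P' \<alpha>'"
    and "assoc_proj G (stab G H M \<phi>) M \<phi> d' P'"
    and "\<forall>x\<in>stab G H M \<phi>. \<forall>i<d'. \<forall>j<d'. P' x $$ (i, j) \<in> Qab"
    and "\<forall>x\<in>stab G H M \<phi>. \<forall>y\<in>stab G H M \<phi>. root_of_unity (\<alpha>' x y)"
    and "\<forall>x\<in>stab G H N \<theta>. \<forall>y\<in>stab G H N \<theta>. \<alpha> x y = \<alpha>' x y"
    and "\<forall>c\<in>centralizer_in G N. \<exists>z. P c = z \<cdot>\<^sub>m 1\<^sub>m d \<and> P' c = z \<cdot>\<^sub>m 1\<^sub>m d'"
  shows "(\<forall>a\<in>stab_pair p G H N \<theta>. \<forall>h\<in>stab G H N \<theta>.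
             mu G (stab G (carrier G) N \<theta>) N d P a h = mu G (stab G H M \<phi>) M d' P' a h)
         \<longleftrightarrow> (\<exists>T. coset_transversal G (stab G H N \<theta>) (stab_pair p G H N \<theta>) T \<and>
             (\<forall>a\<in>T. \<forall>h\<in>stab G H N \<theta>.
             mu G (stab G (carrier G) N \<theta>) N d P a h = mu G (stab G H M \<phi>) M d' P' a h))"
proof -
  have grp: "group G" using assms(2) .
  interpret group G by fact
  have Ht1: "subgroup (carrier G) G" "N \<lhd> (G\<lparr>carrier := carrier G\<rparr>)" "irr_char G N \<theta>"
    using assms(4) unfolding H_triple_def by auto
  have Ht2: "subgroup H G" "M \<lhd> (G\<lparr>carrier := H\<rparr>)" "irr_char G M \<phi>"
    using assms(5) unfolding H_triple_def by auto
  interpret P1: pset G "carrier G" N \<theta> d P \<alpha>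
    by (intro pset.intro pset_axioms.intro grp assms(3) Ht1 assms(10) assms(11) assms(12) assms(13))
  interpret P2: pset G H M \<phi> d' P' \<alpha>'
    by (intro pset.intro pset_axioms.intro grp assms(3) Ht2 assms(14) assms(15) assms(16) assms(17))
  define K where "K = stab G H N \<theta>"
  define A where "A = stab_pair p G H N \<theta>"
  have Hc: "\<And>x. x \<in> H \<Longrightarrow> x \<in> carrier G" using subgroup.subset[OF Ht2(1)] by auto
  have ccN: "\<And>c n. c \<in> H \<Longrightarrow> n \<in> N \<Longrightarrow> c \<otimes>\<^bsub>G\<^esub> n \<otimes>\<^bsub>G\<^esub> inv\<^bsub>G\<^esub> c \<in> N" using P1.cc Hc by blast
  have Ksub: "subgroup K G" unfolding K_def using stab_subgroup[OF Ht2(1) P1.Ncar ccN] .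
  have KS1: "\<And>x. x \<in> K \<Longrightarrow> x \<in> stab G (carrier G) N \<theta>" unfolding K_def stab_def using Hc by auto
  have KS2: "\<And>x. x \<in> K \<longleftrightarrow> x \<in> stab G H M \<phi>"
  proof -
    fix x
    have "x \<in> K \<longleftrightarrow> (x, id) \<in> A" unfolding K_def A_def stab_def stab_pair_def using id_Hgal by auto
    also have "\<dots> \<longleftrightarrow> (x, id) \<in> stab_pair p G H M \<phi>" unfolding A_def using assms(9) by simp
    also have "\<dots> \<longleftrightarrow> x \<in> stab G H M \<phi>" unfolding stab_def stab_pair_def using id_Hgal by auto
    finally show "x \<in> K \<longleftrightarrow> x \<in> stab G H M \<phi>" .
  qed
  have Amem: "x \<in> H \<and> \<sigma> \<in> Gal_ab \<and> fixes_char G N \<theta> x \<sigma> \<and> fixes_char G M \<phi> x \<sigma>" if a: "(x, \<sigma>) \<in> A" for x \<sigma>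
  proof -
    have "(x, \<sigma>) \<in> stab_pair p G H M \<phi>" using a assms(9) unfolding A_def by simp
    thus ?thesis using a Hgal_Gal unfolding A_def stab_pair_def by auto
  qed
  show ?thesis unfolding K_def[symmetric] A_def[symmetric]
  proof
    assume L: "\<forall>a\<in>A. \<forall>h\<in>K. mu G (stab G (carrier G) N \<theta>) N d P a h = mu G (stab G H M \<phi>) M d' P' a h"
    have Ac: "\<And>a. a \<in> A \<Longrightarrow> fst a \<in> carrier G"
    proof -
      fix a assume "a \<in> A"
      then obtain x \<sigma> where "a = (x, \<sigma>)" "(x, \<sigma>) \<in> A" by (cases a) auto
      thus "fst a \<in> carrier G" using Amem Hc by auto
    qed
    have Acl: "\<And>a h. a \<in> A \<Longrightarrow> h \<in> K \<Longrightarrow> (h \<otimes>\<^bsub>G\<^esub> fst a, snd a) \<in> A"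
    proof -
      fix a h assume a: "a \<in> A" and h: "h \<in> K"
      obtain x \<sigma> where ax: "a = (x, \<sigma>)" by (cases a)
      have m: "x \<in> H" "fixes_char G N \<theta> x \<sigma>" "\<sigma> \<in> Hgal p" using a ax unfolding A_def stab_pair_def by auto
      have "h \<in> H" using h unfolding K_def stab_def by auto
      hence "h \<otimes>\<^bsub>G\<^esub> x \<in> H" using subgroup.m_closed[OF Ht2(1) _ m(1)] by simp
      moreover have "fixes_char G N \<theta> (h \<otimes>\<^bsub>G\<^esub> x) \<sigma>"
        using fixes_char_mult[OF Ht2(1) P1.Ncar ccN m(1) m(2)] h unfolding K_def by simp
      ultimately show "(h \<otimes>\<^bsub>G\<^esub> fst a, snd a) \<in> A" using ax m(3) unfolding A_def stab_pair_def by simp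
    qed
    from transversal_exists[OF Ksub Ac Acl] obtain T where T: "coset_transversal G K A T" by blast
    hence "T \<subseteq> A" unfolding coset_transversal_def by simp
    thus "\<exists>T. coset_transversal G K A T \<and>
          (\<forall>a\<in>T. \<forall>h\<in>K. mu G (stab G (carrier G) N \<theta>) N d P a h = mu G (stab G H M \<phi>) M d' P' a h)"
      using T L by blast
  next
    assume "\<exists>T. coset_transversal G K A T \<and>
          (\<forall>a\<in>T. \<forall>h\<in>K. mu G (stab G (carrier G) N \<theta>) N d P a h = mu G (stab G H M \<phi>) M d' P' a h)"
    then obtain T where T: "coset_transversal G K A T"
      and R: "\<forall>a\<in>T. \<forall>h\<in>K. mu G (stab G (carrier G) N \<theta>) N d P a h = mu G (stab G H M \<phi>) M d' P' a h" by blast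
    show "\<forall>a\<in>A. \<forall>h\<in>K. mu G (stab G (carrier G) N \<theta>) N d P a h = mu G (stab G H M \<phi>) M d' P' a h"
    proof (intro ballI)
      fix a h assume a: "a \<in> A" and h: "h \<in> K"
      from T a obtain t k where tT: "t \<in> T" and k: "k \<in> K" and at: "a = (k \<otimes>\<^bsub>G\<^esub> fst t, snd t)"
        unfolding coset_transversal_def by blast
      obtain x \<sigma> where tx: "t = (x, \<sigma>)" by (cases t)
      have tA: "(x, \<sigma>) \<in> A" using tT tx T unfolding coset_transversal_def by auto
      from Amem[OF tA] have x: "x \<in> H" and \<sigma>: "\<sigma> \<in> Gal_ab" and f1: "fixes_char G N \<theta> x \<sigma>"
        and f2: "fixes_char G M \<phi> x \<sigma>" by auto
      have kK: "k \<in> K" by fact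
      have c1: "mu G (stab G (carrier G) N \<theta>) N d P (k \<otimes>\<^bsub>G\<^esub> x, \<sigma>) h = mu G (stab G (carrier G) N \<theta>) N d P (x, \<sigma>) h *
           (\<sigma> (\<alpha> k (inv\<^bsub>G\<^esub> k)) * \<sigma> (inverse (\<alpha> k (x \<otimes>\<^bsub>G\<^esub> h \<otimes>\<^bsub>G\<^esub> inv\<^bsub>G\<^esub> x) * \<alpha> (k \<otimes>\<^bsub>G\<^esub> (x \<otimes>\<^bsub>G\<^esub> h \<otimes>\<^bsub>G\<^esub> inv\<^bsub>G\<^esub> x)) (inv\<^bsub>G\<^esub> k))))"
        using P1.mu_coset[OF Hc[OF x] \<sigma> f1 KS1[OF k]] KS1[OF h] by blast
      have c2: "mu G (stab G H M \<phi>) M d' P' (k \<otimes>\<^bsub>G\<^esub> x, \<sigma>) h = mu G (stab G H M \<phi>) M d' P' (x, \<sigma>) h *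
           (\<sigma> (\<alpha>' k (inv\<^bsub>G\<^esub> k)) * \<sigma> (inverse (\<alpha>' k (x \<otimes>\<^bsub>G\<^esub> h \<otimes>\<^bsub>G\<^esub> inv\<^bsub>G\<^esub> x) * \<alpha>' (k \<otimes>\<^bsub>G\<^esub> (x \<otimes>\<^bsub>G\<^esub> h \<otimes>\<^bsub>G\<^esub> inv\<^bsub>G\<^esub> x)) (inv\<^bsub>G\<^esub> k))))"
        using P2.mu_coset[OF x \<sigma> f2 KS2[THEN iffD1, OF k]] KS2[THEN iffD1, OF h] by blast
      have z: "x \<otimes>\<^bsub>G\<^esub> h \<otimes>\<^bsub>G\<^esub> inv\<^bsub>G\<^esub> x \<in> K" unfolding K_def using stab_conj[OF Ht2(1) P1.Ncar ccN x \<sigma> f1] h unfolding K_def by blast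
      have ik: "inv\<^bsub>G\<^esub> k \<in> K" using subgroup.m_inv_closed[OF Ksub k] .
      have kz: "k \<otimes>\<^bsub>G\<^esub> (x \<otimes>\<^bsub>G\<^esub> h \<otimes>\<^bsub>G\<^esub> inv\<^bsub>G\<^esub> x) \<in> K" using subgroup.m_closed[OF Ksub k z] .
      have aeq: "\<And>u v. u \<in> K \<Longrightarrow> v \<in> K \<Longrightarrow> \<alpha> u v = \<alpha>' u v" using assms(18) unfolding K_def by blast
      have "mu G (stab G (carrier G) N \<theta>) N d P (x, \<sigma>) h = mu G (stab G H M \<phi>) M d' P' (x, \<sigma>) h"
        using R tT tx h by blast
      hence "mu G (stab G (carrier G) N \<theta>) N d P (k \<otimes>\<^bsub>G\<^esub> x, \<sigma>) h = mu G (stab G H M \<phi>) M d' P' (k \<otimes>\<^bsub>G\<^esub> x, \<sigma>) h"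
        using c1 c2 aeq[OF k ik] aeq[OF k z] aeq[OF kz ik] by simp
      thus "mu G (stab G (carrier G) N \<theta>) N d P a h = mu G (stab G H M \<phi>) M d' P' a h"
        using at tx by simp
    qed
  qed
qed


end
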